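(* Let $K\ge 2$ be fixed and let $P^\star=(P^\star_{pq})_{p,q\in\{1,\dots,K\}}$ be a fixed real $K\times K$ matrix. For each $N\ge 1$ let $z^{\star,N}\in\{1,\dots,K\}^N$ be a deterministic label vector and let $X^N=(X_{ij})_{i,j\in\{1,\dots,N\}}$ be a random matrix whose entries are independent, take values in $[0,1]$, and are such that for all $p,q$ the variables $(X_{ij})_{i\in I_p(z^{\star,N}),\,j\in I_q(z^{\star,N})}$ are identically distributed with $\mathbb{E}[X_{ij}]=P^\star_{pq}$. Assume: (A1) (identifiability) $\delta^\star:=\min_{p_1\neq p_2}\max_{q}\big(|P^\star_{p_1q}-P^\star_{p_2q}|+|P^\star_{qp_1}-P^\star_{qp_2}|\big)>0$; (A2) (no drained class) there is $\gamma\in(0,1/K]$ such that for every $\gamma'\in(0,\gamma)$, $z^{\star,N}\in\mathcal{Z}^N_{\gamma'}$ for all $N$ large enough. For each $N$ let $\widehat z^N$ be a random element of $\arg\min_{z\in\{1,\dots,K\}^N}\widehat L_N(z)$, and assume further that there exist deterministic constants $\gamma_0\in(0,1/K]$, $\delta_0>0$ and $N_1$ such that for all $N\ge N_1$, almost surely $\widehat z^N\in\mathcal{Z}^N_{\gamma_0}$ and $\overline{\delta}(\widehat z^N)\ge\delta_0$. Then $\Delta_N(z^{\star,N},\widehat z^N)\to 0$ almost surely as $N\to\infty$, and for every $\gamma'\in(0,\gamma_0)$ and any norm $\|\cdot\|$ on $\mathbb{R}^{K\times K}$, $\max_{z\in\mathcal{Z}^N_{\gamma'}}\|\widehat P(z)-\overline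 P(z)\|\to0$ almost surely. More precisely, for every $r\in(0,1/3)$ there exist $C>0$ and $N_0$ such that for all $N\ge N_0$, $$\mathbb{P}\big(\Delta_N(z^{\star,N},\widehat z^N)\le C N^{-r}\big)\ge 1-e^{-N}.$$
   Context: Notation: $\{1,\dots,K\}^N$ is the set of label vectors $z=(z_i)_{i=1}^N$. For $z$ and $p\in\{1,\dots,K\}$, $I_p(z)=\{i: z_i=p\}$ and $N_p(z)=|I_p(z)|$. Given the $N\times N$ matrix $X$: $\widehat\mu_{iq}(z)=\frac{1}{N_q(z)}\sum_{j\in I_q(z)}X_{ij}$ if $N_q(z)\neq0$, else $0$; $\widehat\nu_{pj}(z)=\frac{1}{N_p(z)}\sum_{i\in I_p(z)}X_{ij}$ if $N_p(z)\ne0$, else $0$; $\widehat P_{pq}(z)=\frac{1}{N_p(z)N_q(z)}\sum_{i\in I_p(z)}\sum_{j\in I_q(z)}X_{ij}$ if $N_p(z)N_q(z)\ne0$, else $0$. For deterministic $z$, $\overline P_{pq}(z):=\mathbb{E}[\widehat P_{pq}(z)]$ (and this function of $z$ is then evaluated at random $z$ when needed). Objective: $\widehat L_N(z)=\frac1N\sum_{i=1}^N\sum_{q=1}^K\big(|\widehat\mu_{iq}(z)-\widehat P_{z_iq}(z)|+|\widehat\nu_{qi}(z)-\widehat P_{qz_i}(z)|\big)$ (i.e. the average $\ell^1$ distance between the vector $(\widehat\mu_{iq}(z))_q,(\widehat\nu_{qi}(z))_q$ and $(\widehat P_{z_iq}(z))_q,(\widehat P_{qz_i}(z))_q$ in $\mathbb{R}^{2K}$).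 $\overline{\delta}(z)=\min_{p_1\ne p_2}\max_q\big(|\overline P_{p_1q}(z)-\overline P_{p_2q}(z)|+|\overline P_{qp_1}(z)-\overline P_{qp_2}(z)|\big)$. $\mathcal{Z}^N_{\gamma}=\{z\in\{1,\dots,K\}^N: N_p(z)/N\ge\gamma \text{ for all } p\}$. $\Delta_N(z,z')=\frac{K}{N^2(K-1)}\sum_{i,j=1}^N\mathbb{1}_{z_i=z_j}\mathbb{1}_{z'_i\neq z'_j}$. *)

theory Defs
  imports "HOL-Probability.Probability"
begin

text \<open>Label vectors z in {1..K}^N, represented as extensional functions on {1..N}.
Matrices X are functions nat => nat => real, indexed from 1.\<close>

definition labels :: "nat \<Rightarrow> nat \<Rightarrow> (nat \<Rightarrow> nat) set" where
  "labels K N = PiE {1..N} (\<lambda>_. {1..K})"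

definition Icl :: "nat \<Rightarrow> (nat \<Rightarrow> nat) \<Rightarrow> nat \<Rightarrow> nat set" where
  "Icl N z p = {i \<in> {1..N}. z i = p}"

definition Ncl :: "nat \<Rightarrow> (nat \<Rightarrow> nat) \<Rightarrow> nat \<Rightarrow> nat" where
  "Ncl N z p = card (Icl N z p)"

definition mu_hat :: "nat \<Rightarrow> (nat \<Rightarrow> nat \<Rightarrow> real) \<Rightarrow> (nat \<Rightarrow> nat) \<Rightarrow> nat \<Rightarrow> nat \<Rightarrow> real" where
  "mu_hat N X z i q = (if Ncl N z q \<noteq> 0
     then (\<Sum>j\<in>Icl N z q. X i j) / real (Ncl N z q) else 0)"

definition nu_hat :: "nat \<Rightarrow> (nat \<Rightarrow> nat \<Rightarrow> real) \<Rightarrow> (nat \<Rightarrow> nat) \<Rightarrow> nat \<Rightarrow> nat \<Rightarrow> real" where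
  "nu_hat N X z p j = (if Ncl N z p \<noteq> 0
     then (\<Sum>i\<in>Icl N z p. X i j) / real (Ncl N z p) else 0)"

definition P_hat :: "nat \<Rightarrow> (nat \<Rightarrow> nat \<Rightarrow> real) \<Rightarrow> (nat \<Rightarrow> nat) \<Rightarrow> nat \<Rightarrow> nat \<Rightarrow> real" where
  "P_hat N X z p q = (if Ncl N z p * Ncl N z q \<noteq> 0
     then (\<Sum>i\<in>Icl N z p. \<Sum>j\<in>Icl N z q. X i j) / (real (Ncl N z p) * real (Ncl N z q))
     else 0)"

definition L_hat :: "nat \<Rightarrow> nat \<Rightarrow> (nat \<Rightarrow> nat \<Rightarrow> real) \<Rightarrow> (nat \<Rightarrow> nat) \<Rightarrow> real" where
  "L_hat K N X z = (1 / real N) * (\<Sum>i\<in>{1..N}. \<Sum>q\<in>{1..K}.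
      \<bar>mu_hat N X z i q - P_hat N X z (z i) q\<bar> + \<bar>nu_hat N X z q i - P_hat N X z q (z i)\<bar>)"

definition sep :: "nat \<Rightarrow> (nat \<Rightarrow> nat \<Rightarrow> real) \<Rightarrow> real" where
  "sep K A = Min {Max {\<bar>A p1 q - A p2 q\<bar> + \<bar>A q p1 - A q p2\<bar> | q. q \<in> {1..K}}
                   | p1 p2. p1 \<in> {1..K} \<and> p2 \<in> {1..K} \<and> p1 \<noteq> p2}"

definition P_bar :: "'a measure \<Rightarrow> nat \<Rightarrow> (nat \<Rightarrow> nat \<Rightarrow> 'a \<Rightarrow> real) \<Rightarrow> (nat \<Rightarrow> nat) \<Rightarrow> nat \<Rightarrow> nat \<Rightarrow> real" where
  "P_bar M N X z p q = (\<integral>\<omega>. P_hat N (\<lambda>i j. X i j \<omega>) z p q \<partial>M)"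

definition delta_bar :: "'a measure \<Rightarrow> nat \<Rightarrow> nat \<Rightarrow> (nat \<Rightarrow> nat \<Rightarrow> 'a \<Rightarrow> real) \<Rightarrow> (nat \<Rightarrow> nat) \<Rightarrow> real" where
  "delta_bar M K N X z = sep K (P_bar M N X z)"

definition Zgam :: "nat \<Rightarrow> nat \<Rightarrow> real \<Rightarrow> (nat \<Rightarrow> nat) set" where
  "Zgam K N g = {z \<in> labels K N. \<forall>p\<in>{1..K}. real (Ncl N z p) / real N \<ge> g}"

definition Delta :: "nat \<Rightarrow> nat \<Rightarrow> (nat \<Rightarrow> nat) \<Rightarrow> (nat \<Rightarrow> nat) \<Rightarrow> real" where
  "Delta K N z z' = real K / (real N ^ 2 * (real K - 1)) *
     real (card {(i, j). i \<in> {1..N} \<and> j \<in> {1..N} \<and> z i = z j \<and> z' i \<noteq> z' j})"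

definition KMat :: "nat \<Rightarrow> (nat \<Rightarrow> nat \<Rightarrow> real) set" where
  "KMat K = {A. \<forall>p q. \<not> (p \<in> {1..K} \<and> q \<in> {1..K}) \<longrightarrow> A p q = 0}"

definition restrictK :: "nat \<Rightarrow> (nat \<Rightarrow> nat \<Rightarrow> real) \<Rightarrow> (nat \<Rightarrow> nat \<Rightarrow> real)" where
  "restrictK K A = (\<lambda>p q. if p \<in> {1..K} \<and> q \<in> {1..K} then A p q else 0)"

definition is_mat_norm :: "nat \<Rightarrow> ((nat \<Rightarrow> nat \<Rightarrow> real) \<Rightarrow> real) \<Rightarrow> bool" where
  "is_mat_norm K nrm \<longleftrightarrow>
     (\<forall>A\<in>KMat K. nrm A \<ge> 0 \<and> (nrm A = 0 \<longleftrightarrow> A = (\<lambda>_ _. 0))) \<and>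
     (\<forall>A\<in>KMat K. \<forall>c. nrm (\<lambda>p q. c * A p q) = \<bar>c\<bar> * nrm A) \<and>
     (\<forall>A\<in>KMat K. \<forall>B\<in>KMat K. nrm (\<lambda>p q. A p q + B p q) \<le> nrm A + nrm B)"

end

theory Submission
  imports Defs
begin
lemma (in prob_space) hoeff_w:
  fixes Y :: "'b \<Rightarrow> 'a \<Rightarrow> real" and c :: "'b \<Rightarrow> real"
  assumes fin: "finite I" and ind: "indep_vars (\<lambda>_. borel) Y I"
    and rng: "\<And>k \<omega>. k \<in> I \<Longrightarrow> \<omega> \<in> space M \<Longrightarrow> 0 \<le> Y k \<omega> \<and> Y k \<omega> \<le> 1"
    and t: "t > 0" and V: "(\<Sum>k\<in>I. (c k)\<^sup>2) \<le> V" "V > 0"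
  shows "prob {\<omega>\<in>space M. t \<le> (\<Sum>k\<in>I. c k * (Y k \<omega> - expectation (Y k)))} \<le> exp (-2*t\<^sup>2/V)"
proof (cases "(\<Sum>k\<in>I. (c k)\<^sup>2) = 0")
  case True
  then have "\<forall>k\<in>I. c k = 0" using fin by (simp add: sum_nonneg_eq_0_iff)
  then have "{\<omega>\<in>space M. t \<le> (\<Sum>k\<in>I. c k * (Y k \<omega> - expectation (Y k)))} = {}"
    using t by auto
  then show ?thesis by (metis measure_empty exp_ge_zero)
next
  case False
  then have pos: "(\<Sum>k\<in>I. (c k)\<^sup>2) > 0" by (simp add: order_less_le sum_nonneg)
  have meas: "\<And>k. k \<in> I \<Longrightarrow> random_variable borel (Y k)"
    using ind unfolding indep_vars_def by blast
  interpret H: Hoeffding_ineq M I "\<lambda>k \<omega>. c k * Y k \<omega>" "\<lambda>k. min 0 (c k)" "\<lambda>k. max 0 (c k)"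
      "\<Sum>k\<in>I. expectation (\<lambda>\<omega>. c k * Y k \<omega>)"
  proof unfold_locales
    show "finite I" by fact
    show "indep_vars (\<lambda>_. borel) (\<lambda>k \<omega>. c k * Y k \<omega>) I"
      by (rule indep_vars_compose2[OF ind]) auto
    fix k assume k: "k \<in> I"
    show "AE x in M. c k * Y k x \<in> {min 0 (c k)..max 0 (c k)}"
    proof (rule AE_I2)
      fix x assume x: "x \<in> space M"
      have "0 \<le> Y k x" "Y k x \<le> 1" using rng[OF k x] by auto
      then show "c k * Y k x \<in> {min 0 (c k)..max 0 (c k)}"
        by (cases "c k \<ge> 0") (auto simp: mult_le_cancel_left1 mult_nonneg_nonneg mult_nonpos_nonneg
              intro: mult_left_le mult_left_mono_neg order_trans)
    qed
  qed
  have sq: "(\<Sum>k\<in>I. (max 0 (c k) - min 0 (c k))\<^sup>2) = (\<Sum>k\<in>I. (c k)\<^sup>2)"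
    by (intro sum.cong) (auto simp: max_def min_def)
  have integ: "\<And>k. k \<in> I \<Longrightarrow> integrable M (Y k)"
  proof -
    fix k assume k: "k \<in> I"
    show "integrable M (Y k)"
      by (rule integrable_const_bound[where B=1]) (use rng[OF k] meas[OF k] in auto)
  qed
  have eq: "{\<omega>\<in>space M. t \<le> (\<Sum>k\<in>I. c k * (Y k \<omega> - expectation (Y k)))}
     = {\<omega>\<in>space M. (\<Sum>k\<in>I. c k * Y k \<omega>) \<ge> (\<Sum>k\<in>I. expectation (\<lambda>\<omega>. c k * Y k \<omega>)) + t}"
    by (auto simp: right_diff_distrib sum_subtractf)
  have "prob {\<omega>\<in>space M. (\<Sum>k\<in>I. c k * Y k \<omega>) \<ge> (\<Sum>k\<in>I. expectation (\<lambda>\<omega>. c k * Y k \<omega>)) + t}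
      \<le> exp (-2 * t\<^sup>2 / (\<Sum>k\<in>I. (c k)\<^sup>2))"
    using H.Hoeffding_ineq_ge[of t] t pos sq by simp
  also have "\<dots> \<le> exp (-2*t\<^sup>2/V)"
    using pos V t by (auto intro!: divide_left_mono mult_pos_pos simp: power2_eq_square)
  finally show ?thesis using eq by simp
qed

lemma mu_lin: "mu_hat N (\<lambda>i j. A i j - B i j) z i q = mu_hat N A z i q - mu_hat N B z i q"
  unfolding mu_hat_def by (simp add: sum_subtractf diff_divide_distrib)
lemma nu_lin: "nu_hat N (\<lambda>i j. A i j - B i j) z p j = nu_hat N A z p j - nu_hat N B z p j"
  unfolding nu_hat_def by (simp add: sum_subtractf diff_divide_distrib)
lemma P_lin: "P_hat N (\<lambda>i j. A i j - B i j) z p q = P_hat N A z p q - P_hat N B z p q"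
  unfolding P_hat_def by (simp add: sum_subtractf diff_divide_distrib)

definition devL :: "nat \<Rightarrow> nat \<Rightarrow> (nat \<Rightarrow> nat \<Rightarrow> real) \<Rightarrow> (nat \<Rightarrow> nat) \<Rightarrow> real" where
  "devL K N D z = (1 / real N) * (\<Sum>i\<in>{1..N}. \<Sum>q\<in>{1..K}.
      \<bar>mu_hat N D z i q\<bar> + \<bar>P_hat N D z (z i) q\<bar> + \<bar>nu_hat N D z q i\<bar> + \<bar>P_hat N D z q (z i)\<bar>)"

lemma abs4: "\<bar>(\<bar>a - b\<bar> + \<bar>c - d\<bar>) - (\<bar>a' - b'\<bar> + \<bar>c' - d'\<bar>)\<bar>
   \<le> \<bar>a - a'\<bar> + \<bar>b - b'\<bar> + \<bar>c - c'\<bar> + \<bar>d - d'\<bar>" for a b c d a' b' c' d' :: real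
  by linarith

lemma L_diff: "\<bar>L_hat K N A z - L_hat K N B z\<bar> \<le> devL K N (\<lambda>i j. A i j - B i j) z"
proof -
  let ?t = "\<lambda>Y i q. \<bar>mu_hat N Y z i q - P_hat N Y z (z i) q\<bar> + \<bar>nu_hat N Y z q i - P_hat N Y z q (z i)\<bar>"
  have eq: "L_hat K N A z - L_hat K N B z = (1 / real N) * (\<Sum>i\<in>{1..N}. \<Sum>q\<in>{1..K}. ?t A i q - ?t B i q)"
    unfolding L_hat_def by (simp only: sum_subtractf right_diff_distrib)
  have "\<bar>L_hat K N A z - L_hat K N B z\<bar> = (1 / real N) * \<bar>\<Sum>i\<in>{1..N}. \<Sum>q\<in>{1..K}. ?t A i q - ?t B i q\<bar>"
    unfolding eq abs_mult by (simp only: abs_divide abs_one abs_of_nat)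
  also have "\<dots> \<le> (1 / real N) * (\<Sum>i\<in>{1..N}. \<Sum>q\<in>{1..K}. \<bar>?t A i q - ?t B i q\<bar>)"
  proof (rule mult_left_mono)
    show "\<bar>\<Sum>i\<in>{1..N}. \<Sum>q\<in>{1..K}. ?t A i q - ?t B i q\<bar> \<le> (\<Sum>i\<in>{1..N}. \<Sum>q\<in>{1..K}. \<bar>?t A i q - ?t B i q\<bar>)"
      by (rule order_trans[OF sum_abs], rule sum_mono, rule sum_abs)
  qed simp
  also have "\<dots> \<le> devL K N (\<lambda>i j. A i j - B i j) z"
    unfolding devL_def mu_lin nu_lin P_lin
    by (rule mult_left_mono, rule sum_mono, rule sum_mono, rule abs4) simp
  finally show ?thesis .
qed

lemma sum_Icl: "(\<Sum>j\<in>Icl N z q. f j) = (\<Sum>j\<in>{1..N}. if z j = q then f j else 0)"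
  unfolding Icl_def by (rule sum.inter_filter) simp

lemma finite_Icl[simp]: "finite (Icl N z q)" unfolding Icl_def by simp

lemma L_zero:
  assumes zs: "zs \<in> labels K N" and A: "A = (\<lambda>i j. Pst (zs i) (zs j))"
  shows "L_hat K N A zs = 0"
proof -
  have row: "(\<Sum>j\<in>Icl N zs q. A i j) = real (Ncl N zs q) * Pst (zs i) q" for i q
  proof -
    have "(\<Sum>j\<in>Icl N zs q. A i j) = (\<Sum>j\<in>Icl N zs q. Pst (zs i) q)"
      by (intro sum.cong) (auto simp: A Icl_def)
    then show ?thesis by (simp add: Ncl_def)
  qed
  have col: "(\<Sum>i\<in>Icl N zs p. A i j) = real (Ncl N zs p) * Pst p (zs j)" for p j
  proof -
    have "(\<Sum>i\<in>Icl N zs p. A i j) = (\<Sum>i\<in>Icl N zs p. Pst p (zs j))"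
      by (intro sum.cong) (auto simp: A Icl_def)
    then show ?thesis by (simp add: Ncl_def)
  qed
  have blk: "(\<Sum>i\<in>Icl N zs p. \<Sum>j\<in>Icl N zs q. A i j) = real (Ncl N zs p) * real (Ncl N zs q) * Pst p q" for p q
  proof -
    have "(\<Sum>i\<in>Icl N zs p. \<Sum>j\<in>Icl N zs q. A i j) = (\<Sum>i\<in>Icl N zs p. real (Ncl N zs q) * Pst p q)"
    proof (intro sum.cong refl)
      fix i assume "i \<in> Icl N zs p"
      then have "zs i = p" by (simp add: Icl_def)
      then show "(\<Sum>j\<in>Icl N zs q. A i j) = real (Ncl N zs q) * Pst p q" by (simp add: row)
    qed
    then show ?thesis by (simp add: Ncl_def)
  qed
  have nz: "Ncl N zs (zs i) \<noteq> 0" if "i \<in> {1..N}" for i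
  proof -
    have "i \<in> Icl N zs (zs i)" using that by (simp add: Icl_def)
    then show ?thesis unfolding Ncl_def using finite_Icl by (metis card_0_eq empty_iff)
  qed
  have "\<And>i q. i \<in> {1..N} \<Longrightarrow> mu_hat N A zs i q = P_hat N A zs (zs i) q"
    using nz unfolding mu_hat_def P_hat_def unfolding blk unfolding row by simp
  moreover have "\<And>i q. i \<in> {1..N} \<Longrightarrow> nu_hat N A zs q i = P_hat N A zs q (zs i)"
    using nz unfolding nu_hat_def P_hat_def unfolding blk unfolding col by simp
  ultimately show ?thesis unfolding L_hat_def by simp
qed

lemma sep_le:
  assumes K: "K \<ge> 2" and p: "p1 \<in> {1..K}" "p2 \<in> {1..K}" "p1 \<noteq> p2"
  shows "sep K A \<le> (\<Sum>q\<in>{1..K}. \<bar>A p1 q - A p2 q\<bar> + \<bar>A q p1 - A q p2\<bar>)"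
proof -
  let ?f = "\<lambda>p1 p2 q. \<bar>A p1 q - A p2 q\<bar> + \<bar>A q p1 - A q p2\<bar>"
  let ?S = "{Max {?f p1 p2 q | q. q \<in> {1..K}} | p1 p2. p1 \<in> {1..K} \<and> p2 \<in> {1..K} \<and> p1 \<noteq> p2}"
  have fin: "finite ?S"
  proof -
    have "?S \<subseteq> (\<lambda>(p1,p2). Max {?f p1 p2 q | q. q \<in> {1..K}}) ` ({1..K} \<times> {1..K})" by auto
    then show ?thesis by (rule finite_subset) auto
  qed
  have "sep K A \<le> Max {?f p1 p2 q | q. q \<in> {1..K}}"
    unfolding sep_def by (rule Min_le[OF fin]) (use p in blast)
  also have "\<dots> \<le> (\<Sum>q\<in>{1..K}. ?f p1 p2 q)"
  proof -
    have eq: "{?f p1 p2 q | q. q \<in> {1..K}} = ?f p1 p2 ` {1..K}" by auto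
    show ?thesis unfolding eq using K
      by (subst Max_le_iff) (auto intro!: member_le_sum)
  qed
  finally show ?thesis .
qed

lemma stab:
  fixes Pst :: "nat \<Rightarrow> nat \<Rightarrow> real"
  assumes N: "N \<ge> 1" and K: "K \<ge> 2" and zs: "zs \<in> labels K N" and z: "z \<in> labels K N"
    and d: "0 < \<delta>" "\<delta> \<le> sep K (P_hat N A z)"
    and A: "A = (\<lambda>i j. Pst (zs i) (zs j))"
  shows "Delta K N zs z \<le> 4 * L_hat K N A z / \<delta>"
proof -
  define PA where "PA = P_hat N A z"
  define g where "g i = (\<Sum>q\<in>{1..K}. \<bar>mu_hat N A z i q - PA (z i) q\<bar> + \<bar>nu_hat N A z q i - PA q (z i)\<bar>)" for i
  have g0: "g i \<ge> 0" for i unfolding g_def by (intro sum_nonneg) auto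
  have L: "L_hat K N A z = (1 / real N) * (\<Sum>i\<in>{1..N}. g i)"
    unfolding L_hat_def g_def PA_def ..
  have muinv: "mu_hat N A z i q = mu_hat N A z j q" if "zs i = zs j" for i j q
    using that unfolding mu_hat_def A by simp
  have nuinv: "nu_hat N A z q i = nu_hat N A z q j" if "zs i = zs j" for i j q
    using that unfolding nu_hat_def A by simp
  have zl: "\<And>i. i \<in> {1..N} \<Longrightarrow> z i \<in> {1..K}" using z unfolding labels_def by auto
  have pair: "\<delta> \<le> g i + g j" if ij: "i \<in> {1..N}" "j \<in> {1..N}" "zs i = zs j" "z i \<noteq> z j" for i j
  proof -
    have "\<delta> \<le> (\<Sum>q\<in>{1..K}. \<bar>PA (z i) q - PA (z j) q\<bar> + \<bar>PA q (z i) - PA q (z j)\<bar>)"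
      using d(2) sep_le[OF K zl[OF ij(1)] zl[OF ij(2)] ij(4), of PA] unfolding PA_def by linarith
    also have "\<dots> \<le> (\<Sum>q\<in>{1..K}. (\<bar>mu_hat N A z i q - PA (z i) q\<bar> + \<bar>nu_hat N A z q i - PA q (z i)\<bar>)
          + (\<bar>mu_hat N A z j q - PA (z j) q\<bar> + \<bar>nu_hat N A z q j - PA q (z j)\<bar>))"
    proof (intro sum_mono)
      fix q
      show "\<bar>PA (z i) q - PA (z j) q\<bar> + \<bar>PA q (z i) - PA q (z j)\<bar>
          \<le> (\<bar>mu_hat N A z i q - PA (z i) q\<bar> + \<bar>nu_hat N A z q i - PA q (z i)\<bar>)
          + (\<bar>mu_hat N A z j q - PA (z j) q\<bar> + \<bar>nu_hat N A z q j - PA q (z j)\<bar>)"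
        using muinv[OF ij(3), of q] nuinv[OF ij(3), of q] by linarith
    qed
    also have "\<dots> = g i + g j" unfolding g_def by (simp add: sum.distrib)
    finally show ?thesis .
  qed
  define S where "S = {(i, j). i \<in> {1..N} \<and> j \<in> {1..N} \<and> zs i = zs j \<and> z i \<noteq> z j}"
  have Ssub: "S \<subseteq> {1..N} \<times> {1..N}" unfolding S_def by auto
  have finS: "finite S" using Ssub by (rule finite_subset) auto
  have "real (card S) * \<delta> = (\<Sum>(i,j)\<in>S. \<delta>)" by simp
  also have "\<dots> \<le> (\<Sum>(i,j)\<in>S. g i + g j)"
    by (intro sum_mono) (auto simp: S_def intro: pair)
  also have "\<dots> \<le> (\<Sum>(i,j)\<in>{1..N} \<times> {1..N}. g i + g j)"
    by (intro sum_mono2 Ssub) (auto intro: add_nonneg_nonneg g0)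
  also have "\<dots> = (\<Sum>i\<in>{1..N}. \<Sum>j\<in>{1..N}. g i + g j)"
    by (simp add: sum.cartesian_product)
  also have "\<dots> = 2 * real N * (\<Sum>i\<in>{1..N}. g i)"
    by (simp add: sum.distrib sum_distrib_left[symmetric] sum.swap[of "\<lambda>i j. g j"] )
  also have "\<dots> = 2 * real N ^ 2 * L_hat K N A z"
    using N by (simp add: L power2_eq_square)
  finally have cS: "real (card S) * \<delta> \<le> 2 * real N ^ 2 * L_hat K N A z" .
  have Lnn: "L_hat K N A z \<ge> 0" unfolding L by (intro mult_nonneg_nonneg sum_nonneg g0) auto
  have Kf: "real K / (real K - 1) \<le> 2" using K by (simp add: field_simps)
  have "Delta K N zs z = real K / (real N ^ 2 * (real K - 1)) * real (card S)"
    unfolding Delta_def S_def ..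
  also have "\<dots> = (real K / (real K - 1)) * (real (card S) / real N ^ 2)"
    by (simp add: field_simps)
  also have "\<dots> \<le> 2 * (2 * L_hat K N A z / \<delta>)"
  proof (intro mult_mono Kf)
    show "real (card S) / real N ^ 2 \<le> 2 * L_hat K N A z / \<delta>"
      using cS N d(1) by (simp add: field_simps)
  qed (use K Lnn d(1) in auto)
  finally show ?thesis by simp
qed

locale sbm = prob_space M for M :: "'a measure" +
  fixes K :: nat and Pstar :: "nat \<Rightarrow> nat \<Rightarrow> real" and zstar :: "nat \<Rightarrow> nat \<Rightarrow> nat"
    and X :: "nat \<Rightarrow> nat \<Rightarrow> nat \<Rightarrow> 'a \<Rightarrow> real"
  assumes K2: "K \<ge> 2"
    and zstar_lab: "\<And>N. N \<ge> 1 \<Longrightarrow> zstar N \<in> labels K N"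
    and indep: "\<And>N. N \<ge> 1 \<Longrightarrow> indep_vars (\<lambda>_. borel) (\<lambda>(i, j). X N i j) ({1..N} \<times> {1..N})"
    and range01: "\<And>N i j \<omega>. N \<ge> 1 \<Longrightarrow> i \<in> {1..N} \<Longrightarrow> j \<in> {1..N} \<Longrightarrow> \<omega> \<in> space M \<Longrightarrow>
        0 \<le> X N i j \<omega> \<and> X N i j \<omega> \<le> 1"
    and mean: "\<And>N i j. N \<ge> 1 \<Longrightarrow> i \<in> {1..N} \<Longrightarrow> j \<in> {1..N} \<Longrightarrow>
        (\<integral>\<omega>. X N i j \<omega> \<partial>M) = Pstar (zstar N i) (zstar N j)"
begin

definition mm :: "nat \<Rightarrow> nat \<Rightarrow> nat \<Rightarrow> real" where
  "mm N = (\<lambda>i j. Pstar (zstar N i) (zstar N j))"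

definition Dm :: "nat \<Rightarrow> 'a \<Rightarrow> nat \<Rightarrow> nat \<Rightarrow> real" where
  "Dm N \<omega> = (\<lambda>i j. X N i j \<omega> - Pstar (zstar N i) (zstar N j))"

lemma rv: "N \<ge> 1 \<Longrightarrow> i \<in> {1..N} \<Longrightarrow> j \<in> {1..N} \<Longrightarrow> X N i j \<in> borel_measurable M"
  using indep[of N] unfolding indep_vars_def by (auto dest!: bspec[of _ _ "(i,j)"])

lemma integ: "N \<ge> 1 \<Longrightarrow> i \<in> {1..N} \<Longrightarrow> j \<in> {1..N} \<Longrightarrow> integrable M (X N i j)"
  by (rule integrable_const_bound[where B=1]) (use range01[of N i j] rv[of N i j] in auto)

lemma Pbar_eq:
  assumes N: "N \<ge> 1"
  shows "P_bar M N (X N) z p q = P_hat N (mm N) z p q"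
proof -
  have sub: "\<And>p. Icl N z p \<subseteq> {1..N}" unfolding Icl_def by auto
  show ?thesis
  proof (cases "Ncl N z p * Ncl N z q \<noteq> 0")
    case True
    have "P_bar M N (X N) z p q = (\<integral>\<omega>. (\<Sum>i\<in>Icl N z p. \<Sum>j\<in>Icl N z q. X N i j \<omega>) \<partial>M) / (real (Ncl N z p) * real (Ncl N z q))"
      unfolding P_bar_def P_hat_def using True by simp
    also have "(\<integral>\<omega>. (\<Sum>i\<in>Icl N z p. \<Sum>j\<in>Icl N z q. X N i j \<omega>) \<partial>M) = (\<Sum>i\<in>Icl N z p. \<Sum>j\<in>Icl N z q. (\<integral>\<omega>. X N i j \<omega> \<partial>M))"
    proof -
      have "(\<integral>\<omega>. (\<Sum>i\<in>Icl N z p. \<Sum>j\<in>Icl N z q. X N i j \<omega>) \<partial>M) = (\<Sum>i\<in>Icl N z p. (\<integral>\<omega>. (\<Sum>j\<in>Icl N z q. X N i j \<omega>) \<partial>M))"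
        by (rule Bochner_Integration.integral_sum[where f="\<lambda>i \<omega>. \<Sum>j\<in>Icl N z q. X N i j \<omega>"]) (use sub N in \<open>blast intro: Bochner_Integration.integrable_sum integ\<close>)
      also have "\<dots> = (\<Sum>i\<in>Icl N z p. \<Sum>j\<in>Icl N z q. (\<integral>\<omega>. X N i j \<omega> \<partial>M))"
        by (intro sum.cong refl Bochner_Integration.integral_sum) (use N in \<open>auto simp: Icl_def intro!: integ\<close>)
      finally show ?thesis .
    qed
    also have "(\<Sum>i\<in>Icl N z p. \<Sum>j\<in>Icl N z q. (\<integral>\<omega>. X N i j \<omega> \<partial>M)) = (\<Sum>i\<in>Icl N z p. \<Sum>j\<in>Icl N z q. mm N i j)"
      by (intro sum.cong refl) (use N in \<open>auto simp: Icl_def simp: mm_def intro!: mean\<close>)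
    finally show ?thesis unfolding P_hat_def using True by simp
  next
    case False
    then show ?thesis unfolding P_bar_def P_hat_def by simp
  qed
qed

lemma hoeff_prod:
  fixes \<alpha> \<beta> :: "nat \<Rightarrow> real"
  assumes N: "N \<ge> 1" and t: "t > 0" and V: "(\<Sum>i\<in>{1..N}. (\<alpha> i)\<^sup>2) * (\<Sum>j\<in>{1..N}. (\<beta> j)\<^sup>2) \<le> V" "V > 0"
  shows "prob {\<omega>\<in>space M. t \<le> (\<Sum>i\<in>{1..N}. \<Sum>j\<in>{1..N}. \<alpha> i * \<beta> j * Dm N \<omega> i j)} \<le> exp (-2*t\<^sup>2/V)"
proof -
  let ?I = "{1..N} \<times> {1..N}"
  let ?Y = "\<lambda>(i, j). X N i j"
  let ?c = "\<lambda>(i, j). \<alpha> i * \<beta> j"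
  have h: "prob {\<omega>\<in>space M. t \<le> (\<Sum>k\<in>?I. ?c k * (?Y k \<omega> - expectation (?Y k)))} \<le> exp (-2*t\<^sup>2/V)"
  proof (rule hoeff_w[OF _ indep[OF N] _ t _ V(2)])
    show "(\<Sum>k\<in>?I. (?c k)\<^sup>2) \<le> V"
    proof -
      have "(\<Sum>k\<in>?I. (?c k)\<^sup>2) = (\<Sum>i\<in>{1..N}. \<Sum>j\<in>{1..N}. (\<alpha> i)\<^sup>2 * (\<beta> j)\<^sup>2)"
        unfolding sum.cartesian_product by (intro sum.cong) (auto simp: power_mult_distrib)
      also have "\<dots> = (\<Sum>i\<in>{1..N}. (\<alpha> i)\<^sup>2) * (\<Sum>j\<in>{1..N}. (\<beta> j)\<^sup>2)"
        by (simp add: sum_product)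
      finally show ?thesis using V(1) by simp
    qed
  qed (use range01[OF N] in auto)
  have "\<And>\<omega>. (\<Sum>k\<in>?I. ?c k * (?Y k \<omega> - expectation (?Y k))) = (\<Sum>i\<in>{1..N}. \<Sum>j\<in>{1..N}. \<alpha> i * \<beta> j * Dm N \<omega> i j)"
    unfolding sum.cartesian_product by (intro sum.cong) (auto simp: Dm_def mean[OF N])
  then show ?thesis using h by simp
qed

lemma stat_meas:
  assumes N: "N \<ge> 1"
  shows "{\<omega>\<in>space M. t \<le> (\<Sum>i\<in>{1..N}. \<Sum>j\<in>{1..N}. \<alpha> i * \<beta> j * Dm N \<omega> i j)} \<in> sets M"
proof -
  have [measurable]: "(\<lambda>\<omega>. \<Sum>i\<in>{1..N}. \<Sum>j\<in>{1..N}. \<alpha> i * \<beta> j * Dm N \<omega> i j) \<in> borel_measurable M"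
    unfolding Dm_def using rv[OF N] by (auto intro!: borel_measurable_sum borel_measurable_times borel_measurable_diff)
  show ?thesis by measurable
qed

end

definition ind :: "(nat \<Rightarrow> nat) \<Rightarrow> nat \<Rightarrow> nat \<Rightarrow> real" where
  "ind z q j = (if z j = q then 1 else 0)"

definition signs :: "nat \<Rightarrow> (nat \<Rightarrow> real) set" where
  "signs N = PiE {1..N} (\<lambda>_. {-1, 1})"

lemma sum_ind: "(\<Sum>j\<in>{1..N}. ind z q j) = real (Ncl N z q)"
proof -
  have "(\<Sum>j\<in>{1..N}. ind z q j) = (\<Sum>j\<in>Icl N z q. 1)"
    unfolding sum_Icl ind_def ..
  then show ?thesis by (simp add: Ncl_def)
qed

lemma sum_ind_mult: "(\<Sum>j\<in>{1..N}. ind z q j * f j) = (\<Sum>j\<in>Icl N z q. f j)"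
  unfolding sum_Icl ind_def by (intro sum.cong) auto

lemma mu_rep: "mu_hat N D z i q = (\<Sum>j\<in>{1..N}. (ind z q j / real (Ncl N z q)) * D i j)"
proof -
  have "(\<Sum>j\<in>{1..N}. (ind z q j / real (Ncl N z q)) * D i j) = (\<Sum>j\<in>{1..N}. ind z q j * D i j) / real (Ncl N z q)"
    by (simp add: sum_divide_distrib)
  then show ?thesis unfolding mu_hat_def sum_ind_mult by simp
qed

lemma nu_rep: "nu_hat N D z p j = (\<Sum>i\<in>{1..N}. (ind z p i / real (Ncl N z p)) * D i j)"
proof -
  have "(\<Sum>i\<in>{1..N}. (ind z p i / real (Ncl N z p)) * D i j) = (\<Sum>i\<in>{1..N}. ind z p i * D i j) / real (Ncl N z p)"
    by (simp add: sum_divide_distrib)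
  then show ?thesis unfolding nu_hat_def sum_ind_mult by simp
qed

lemma P_rep: "P_hat N D z p q = (\<Sum>i\<in>{1..N}. \<Sum>j\<in>{1..N}. (ind z p i / real (Ncl N z p)) * (ind z q j / real (Ncl N z q)) * D i j)"
proof -
  have "(\<Sum>i\<in>{1..N}. \<Sum>j\<in>{1..N}. (ind z p i / real (Ncl N z p)) * (ind z q j / real (Ncl N z q)) * D i j)
      = (\<Sum>i\<in>{1..N}. ind z p i * (\<Sum>j\<in>{1..N}. ind z q j * D i j)) / (real (Ncl N z p) * real (Ncl N z q))"
    by (simp add: sum_divide_distrib sum_distrib_left mult_ac)
  also have "\<dots> = (\<Sum>i\<in>Icl N z p. \<Sum>j\<in>Icl N z q. D i j) / (real (Ncl N z p) * real (Ncl N z q))"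
    unfolding sum_ind_mult ..
  finally show ?thesis unfolding P_hat_def by simp
qed

lemma sumsq_ind: "(\<Sum>j\<in>{1..N}. (ind z q j / real (Ncl N z q))\<^sup>2) = 1 / real (Ncl N z q)"
proof -
  have "(\<Sum>j\<in>{1..N}. (ind z q j / real (Ncl N z q))\<^sup>2) = (\<Sum>j\<in>{1..N}. ind z q j) / (real (Ncl N z q))\<^sup>2"
  proof -
    have "(\<Sum>j\<in>{1..N}. (ind z q j / real (Ncl N z q))\<^sup>2) = (\<Sum>j\<in>{1..N}. ind z q j / (real (Ncl N z q))\<^sup>2)"
      by (intro sum.cong refl) (simp add: ind_def power_divide)
    then show ?thesis by (simp add: sum_divide_distrib)
  qed
  also have "\<dots> = real (Ncl N z q) / (real (Ncl N z q))\<^sup>2" unfolding sum_ind ..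
  finally show ?thesis by (simp add: power2_eq_square)
qed

lemma sumsq_ind_sig: "\<sigma> \<in> {-1,1} \<Longrightarrow> (\<Sum>j\<in>{1..N}. (\<sigma> * ind z q j / real (Ncl N z q))\<^sup>2) = 1 / real (Ncl N z q)"
  using sumsq_ind[where N=N and z=z and q=q] by (auto simp: power_mult_distrib)

lemma sumsq_sign: "s \<in> signs N \<Longrightarrow> (\<Sum>i\<in>{1..N}. (s i / real N)\<^sup>2) = 1 / real N"
proof -
  assume s: "s \<in> signs N"
  have "(\<Sum>i\<in>{1..N}. (s i / real N)\<^sup>2) = (\<Sum>i\<in>{1..N}. 1 / (real N)\<^sup>2)"
  proof (intro sum.cong refl)
    fix i assume i: "i \<in> {1..N}"
    have "s i = -1 \<or> s i = 1" using s i by (auto simp: signs_def PiE_iff)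
    then show "(s i / real N)\<^sup>2 = 1 / (real N)\<^sup>2" by (auto simp: power_divide)
  qed
  then show ?thesis by (simp add: power2_eq_square)
qed

lemma card_labels: "card (labels K N) = K ^ N"
  unfolding labels_def by (simp add: card_PiE)

lemma finite_labels: "finite (labels K N)"
  unfolding labels_def by (simp add: finite_PiE)

lemma card_signs: "card (signs N) = 2 ^ N"
  unfolding signs_def by (simp add: card_PiE numeral_2_eq_2)

lemma finite_signs: "finite (signs N)"
  unfolding signs_def by (simp add: finite_PiE)

lemma Zgam_sub: "Zgam K N g \<subseteq> labels K N" unfolding Zgam_def by auto
lemma finite_Zgam: "finite (Zgam K N g)" using finite_subset[OF Zgam_sub finite_labels] .
lemma card_Zgam: "card (Zgam K N g) \<le> K ^ N"
  using card_mono[OF finite_labels Zgam_sub] card_labels by simp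

lemma Zgam_mono: "g' \<le> g \<Longrightarrow> Zgam K N g \<subseteq> Zgam K N g'"
  unfolding Zgam_def by force

lemma Zgam_Ncl: "z \<in> Zgam K N g \<Longrightarrow> q \<in> {1..K} \<Longrightarrow> N \<ge> 1 \<Longrightarrow> g * real N \<le> real (Ncl N z q)"
  unfolding Zgam_def by (auto simp: field_simps)

lemma devL_split:
  assumes z: "z \<in> labels K N" and N: "N \<ge> 1"
  shows "devL K N D z \<le> (\<Sum>q\<in>{1..K}. (1 / real N) * (\<Sum>i\<in>{1..N}. \<bar>mu_hat N D z i q\<bar>))
     + (\<Sum>q\<in>{1..K}. (1 / real N) * (\<Sum>i\<in>{1..N}. \<bar>nu_hat N D z q i\<bar>))
     + 2 * (\<Sum>p\<in>{1..K}. \<Sum>q\<in>{1..K}. \<bar>P_hat N D z p q\<bar>)"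
proof -
  define T where "T = (\<Sum>p\<in>{1..K}. \<Sum>q\<in>{1..K}. \<bar>P_hat N D z p q\<bar>)"
  have zl: "\<And>i. i \<in> {1..N} \<Longrightarrow> z i \<in> {1..K}" using z unfolding labels_def by auto
  have b1: "(\<Sum>q\<in>{1..K}. \<bar>P_hat N D z (z i) q\<bar>) \<le> T" if "i \<in> {1..N}" for i
    unfolding T_def by (rule member_le_sum[where f="\<lambda>p. \<Sum>q\<in>{1..K}. \<bar>P_hat N D z p q\<bar>"]) (use zl[OF that] in \<open>auto intro: sum_nonneg\<close>)
  have b2: "(\<Sum>q\<in>{1..K}. \<bar>P_hat N D z q (z i)\<bar>) \<le> T" if "i \<in> {1..N}" for i
  proof -
    have "(\<Sum>q\<in>{1..K}. \<bar>P_hat N D z q (z i)\<bar>) \<le> (\<Sum>q\<in>{1..K}. \<Sum>p\<in>{1..K}. \<bar>P_hat N D z q p\<bar>)"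
      by (intro sum_mono member_le_sum[where f="\<lambda>p. \<bar>P_hat N D _ _ p\<bar>"]) (use zl[OF that] in auto)
    then show ?thesis unfolding T_def .
  qed
  have "devL K N D z = (1 / real N) * (\<Sum>i\<in>{1..N}. (\<Sum>q\<in>{1..K}. \<bar>mu_hat N D z i q\<bar>) + (\<Sum>q\<in>{1..K}. \<bar>P_hat N D z (z i) q\<bar>)
       + (\<Sum>q\<in>{1..K}. \<bar>nu_hat N D z q i\<bar>) + (\<Sum>q\<in>{1..K}. \<bar>P_hat N D z q (z i)\<bar>))"
    unfolding devL_def by (simp only: sum.distrib)
  also have "\<dots> \<le> (1 / real N) * (\<Sum>i\<in>{1..N}. (\<Sum>q\<in>{1..K}. \<bar>mu_hat N D z i q\<bar>) + (\<Sum>q\<in>{1..K}. \<bar>nu_hat N D z q i\<bar>) + 2 * T)"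
    apply (rule mult_left_mono, rule sum_mono)
    subgoal premises prems for i
    proof -
      have i: "i \<in> {1..N}" using prems by auto
      show ?thesis using b1[OF i] b2[OF i] by linarith
    qed
    by simp
  also have "\<dots> = (1 / real N) * (\<Sum>i\<in>{1..N}. \<Sum>q\<in>{1..K}. \<bar>mu_hat N D z i q\<bar>) + (1 / real N) * (\<Sum>i\<in>{1..N}. \<Sum>q\<in>{1..K}. \<bar>nu_hat N D z q i\<bar>) + 2 * T"
    using N by (simp add: sum.distrib distrib_left)
  also have "\<dots> = (\<Sum>q\<in>{1..K}. (1 / real N) * (\<Sum>i\<in>{1..N}. \<bar>mu_hat N D z i q\<bar>))
     + (\<Sum>q\<in>{1..K}. (1 / real N) * (\<Sum>i\<in>{1..N}. \<bar>nu_hat N D z q i\<bar>)) + 2 * T"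
  proof -
    have s1: "(\<Sum>i\<in>{1..N}. \<Sum>q\<in>{1..K}. \<bar>mu_hat N D z i q\<bar>) = (\<Sum>q\<in>{1..K}. \<Sum>i\<in>{1..N}. \<bar>mu_hat N D z i q\<bar>)"
      by (rule sum.swap)
    have s2: "(\<Sum>i\<in>{1..N}. \<Sum>q\<in>{1..K}. \<bar>nu_hat N D z q i\<bar>) = (\<Sum>q\<in>{1..K}. \<Sum>i\<in>{1..N}. \<bar>nu_hat N D z q i\<bar>)"
      by (rule sum.swap)
    show ?thesis unfolding s1 s2 by (simp only: sum_distrib_left)
  qed
  finally show ?thesis unfolding T_def .
qed

context sbm begin

definition Ev :: "nat \<Rightarrow> real \<Rightarrow> (nat \<Rightarrow> real) \<Rightarrow> (nat \<Rightarrow> real) \<Rightarrow> 'a set" where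
  "Ev N t \<alpha> \<beta> = {\<omega>\<in>space M. t \<le> (\<Sum>i\<in>{1..N}. \<Sum>j\<in>{1..N}. \<alpha> i * \<beta> j * Dm N \<omega> i j)}"

definition T1 :: "nat \<Rightarrow> real \<Rightarrow> ((nat \<Rightarrow> nat) \<times> nat \<times> (nat \<Rightarrow> real)) set" where
  "T1 N g = Zgam K N g \<times> {1..K} \<times> signs N"

definition T3 :: "nat \<Rightarrow> real \<Rightarrow> ((nat \<Rightarrow> nat) \<times> (nat \<times> nat) \<times> real) set" where
  "T3 N g = Zgam K N g \<times> ({1..K} \<times> {1..K}) \<times> {-1, 1}"

definition E1 where "E1 N t = (\<lambda>(z, q, s). Ev N t (\<lambda>i. s i / real N) (\<lambda>j. ind z q j / real (Ncl N z q)))"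
definition E2 where "E2 N t = (\<lambda>(z, q, s). Ev N t (\<lambda>i. ind z q i / real (Ncl N z q)) (\<lambda>j. s j / real N))"
definition E3 where "E3 N t = (\<lambda>(z, (p, q), \<sigma>). Ev N t (\<lambda>i. \<sigma> * ind z p i / real (Ncl N z p)) (\<lambda>j. ind z q j / real (Ncl N z q)))"

definition bad :: "nat \<Rightarrow> real \<Rightarrow> real \<Rightarrow> 'a set" where
  "bad N g t = (\<Union>x\<in>T1 N g. E1 N t x) \<union> (\<Union>x\<in>T1 N g. E2 N t x) \<union> (\<Union>x\<in>T3 N g. E3 N t x)"

lemma finite_T1: "finite (T1 N g)" unfolding T1_def by (simp add: finite_Zgam finite_signs)
lemma finite_T3: "finite (T3 N g)" unfolding T3_def by (simp add: finite_Zgam)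

lemma card_T1: "real (card (T1 N g)) \<le> real K ^ N * real K * 2 ^ N"
proof -
  have "card (T1 N g) = card (Zgam K N g) * (K * 2 ^ N)"
    unfolding T1_def by (simp add: card_cartesian_product card_signs)
  also have "\<dots> \<le> K ^ N * (K * 2 ^ N)" by (intro mult_right_mono card_Zgam) simp
  finally have "card (T1 N g) \<le> K ^ N * (K * 2 ^ N)" .
  then have "real (card (T1 N g)) \<le> real (K ^ N * (K * 2 ^ N))" by linarith
  then show ?thesis by simp
qed

lemma card_T3: "real (card (T3 N g)) \<le> real K ^ N * real K * real K * 2"
proof -
  have c2: "card {-1, 1::real} = 2" by simp
  have "card (T3 N g) = card (Zgam K N g) * ((K * K) * 2)"
    unfolding T3_def by (simp add: card_cartesian_product c2)
  also have "\<dots> \<le> K ^ N * ((K * K) * 2)" by (intro mult_right_mono card_Zgam) simp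
  finally have "card (T3 N g) \<le> K ^ N * ((K * K) * 2)" .
  then have "real (card (T3 N g)) \<le> real (K ^ N * ((K * K) * 2))" by linarith
  then show ?thesis by simp
qed

lemma Ev_sets: "N \<ge> 1 \<Longrightarrow> Ev N t \<alpha> \<beta> \<in> sets M"
  unfolding Ev_def by (rule stat_meas)

lemma bad_sets: "N \<ge> 1 \<Longrightarrow> bad N g t \<in> sets M"
  unfolding bad_def E1_def E2_def E3_def
  by (intro sets.Un sets.finite_UN finite_T1 finite_T3) (auto intro: Ev_sets)

lemma Ev_prob:
  assumes N: "N \<ge> 1" and g: "0 < g" "g \<le> 1" and t: "t > 0"
    and a: "(\<Sum>i\<in>{1..N}. (\<alpha> i)\<^sup>2) \<le> 1 / (g * real N)" and b: "(\<Sum>j\<in>{1..N}. (\<beta> j)\<^sup>2) \<le> 1 / (g * real N)"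
  shows "prob (Ev N t \<alpha> \<beta>) \<le> exp (-2 * t\<^sup>2 * (g * real N)\<^sup>2)"
proof -
  have gN: "g * real N > 0" using g N by simp
  have "(\<Sum>i\<in>{1..N}. (\<alpha> i)\<^sup>2) * (\<Sum>j\<in>{1..N}. (\<beta> j)\<^sup>2) \<le> (1 / (g * real N)) * (1 / (g * real N))"
    by (intro mult_mono a b) (use gN in \<open>auto intro: sum_nonneg\<close>)
  also have "\<dots> = 1 / (g * real N)\<^sup>2" by (simp add: power2_eq_square)
  finally have V: "(\<Sum>i\<in>{1..N}. (\<alpha> i)\<^sup>2) * (\<Sum>j\<in>{1..N}. (\<beta> j)\<^sup>2) \<le> 1 / (g * real N)\<^sup>2" .
  have "prob (Ev N t \<alpha> \<beta>) \<le> exp (-2*t\<^sup>2/(1 / (g * real N)\<^sup>2))"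
    unfolding Ev_def by (rule hoeff_prod[OF N t V]) (use g N in simp)
  also have "-2*t\<^sup>2/(1 / (g * real N)\<^sup>2) = -2 * t\<^sup>2 * (g * real N)\<^sup>2" by simp
  finally show ?thesis .
qed

lemma w_sign: "s \<in> signs N \<Longrightarrow> 0 < g \<Longrightarrow> g \<le> 1 \<Longrightarrow> N \<ge> 1 \<Longrightarrow> (\<Sum>i\<in>{1..N}. (s i / real N)\<^sup>2) \<le> 1 / (g * real N)"
proof -
  assume s: "s \<in> signs N" and g: "0 < g" "g \<le> 1" and N: "N \<ge> 1"
  have "g * real N \<le> real N" using g N by (simp add: mult_left_le_one_le)
  then have "1 / real N \<le> 1 / (g * real N)" using g N by (intro divide_left_mono) auto
  then show ?thesis using sumsq_sign[OF s] by simp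
qed

lemma w_ind: "z \<in> Zgam K N g \<Longrightarrow> q \<in> {1..K} \<Longrightarrow> 0 < g \<Longrightarrow> N \<ge> 1 \<Longrightarrow> \<sigma> \<in> {-1, 1} \<Longrightarrow>
   (\<Sum>i\<in>{1..N}. (\<sigma> * ind z q i / real (Ncl N z q))\<^sup>2) \<le> 1 / (g * real N)"
proof -
  assume z: "z \<in> Zgam K N g" and q: "q \<in> {1..K}" and g: "0 < g" and N: "N \<ge> 1" and \<sigma>: "\<sigma> \<in> {-1, 1}"
  have "g * real N \<le> real (Ncl N z q)" by (rule Zgam_Ncl[OF z q N])
  moreover have pos: "0 < g * real N" using g N by simp
  ultimately have "0 < real (Ncl N z q)" by linarith
  then have pp: "0 < real (Ncl N z q) * (g * real N)" using pos by (rule mult_pos_pos)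
  have "1 / real (Ncl N z q) \<le> 1 / (g * real N)"
    by (rule divide_left_mono) (use pp \<open>g * real N \<le> real (Ncl N z q)\<close> in auto)
  then show ?thesis using sumsq_ind_sig[OF \<sigma>] by simp
qed

lemma w_ind1: "z \<in> Zgam K N g \<Longrightarrow> q \<in> {1..K} \<Longrightarrow> 0 < g \<Longrightarrow> N \<ge> 1 \<Longrightarrow>
   (\<Sum>i\<in>{1..N}. (ind z q i / real (Ncl N z q))\<^sup>2) \<le> 1 / (g * real N)"
  using w_ind[of z N g q 1] by simp

lemma bad_prob:
  assumes N: "N \<ge> 1" and g: "0 < g" "g \<le> 1" and t: "t > 0"
  shows "prob (bad N g t) \<le> 4 * real K ^ (N + 2) * 2 ^ N * exp (-2 * t\<^sup>2 * (g * real N)\<^sup>2)"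
proof -
  let ?e = "exp (-2 * t\<^sup>2 * (g * real N)\<^sup>2)"
  have p1: "prob (\<Union>x\<in>T1 N g. E1 N t x) \<le> real K ^ N * real K * 2 ^ N * ?e"
  proof -
    have "prob (\<Union>x\<in>T1 N g. E1 N t x) \<le> (\<Sum>x\<in>T1 N g. prob (E1 N t x))"
      by (rule measure_UNION_le[OF finite_T1]) (auto simp: E1_def intro: Ev_sets[OF N])
    also have "\<dots> \<le> real (card (T1 N g)) * ?e"
    proof (rule sum_bounded_above)
      fix x assume "x \<in> T1 N g"
      then obtain z q s where x: "x = (z, q, s)" "z \<in> Zgam K N g" "q \<in> {1..K}" "s \<in> signs N"
        unfolding T1_def by auto
      have "ind z q j = 1 * ind z q j" for j by simp
      show "prob (E1 N t x) \<le> ?e" unfolding x E1_def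
        by (simp only: case_prod_conv, rule Ev_prob[OF N g t w_sign[OF x(4) g N] w_ind1[OF x(2,3) g(1) N]])
    qed
    also have "\<dots> \<le> real K ^ N * real K * 2 ^ N * ?e" by (intro mult_right_mono card_T1) auto
    finally show ?thesis .
  qed
  have p2: "prob (\<Union>x\<in>T1 N g. E2 N t x) \<le> real K ^ N * real K * 2 ^ N * ?e"
  proof -
    have "prob (\<Union>x\<in>T1 N g. E2 N t x) \<le> (\<Sum>x\<in>T1 N g. prob (E2 N t x))"
      by (rule measure_UNION_le[OF finite_T1]) (auto simp: E2_def intro: Ev_sets[OF N])
    also have "\<dots> \<le> real (card (T1 N g)) * ?e"
    proof (rule sum_bounded_above)
      fix x assume "x \<in> T1 N g"
      then obtain z q s where x: "x = (z, q, s)" "z \<in> Zgam K N g" "q \<in> {1..K}" "s \<in> signs N"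
        unfolding T1_def by auto
      show "prob (E2 N t x) \<le> ?e" unfolding x E2_def
        by (simp only: case_prod_conv, rule Ev_prob[OF N g t w_ind1[OF x(2,3) g(1) N] w_sign[OF x(4) g N]])
    qed
    also have "\<dots> \<le> real K ^ N * real K * 2 ^ N * ?e" by (intro mult_right_mono card_T1) auto
    finally show ?thesis .
  qed
  have p3: "prob (\<Union>x\<in>T3 N g. E3 N t x) \<le> real K ^ N * real K * real K * 2 * ?e"
  proof -
    have "prob (\<Union>x\<in>T3 N g. E3 N t x) \<le> (\<Sum>x\<in>T3 N g. prob (E3 N t x))"
      by (rule measure_UNION_le[OF finite_T3]) (auto simp: E3_def intro: Ev_sets[OF N])
    also have "\<dots> \<le> real (card (T3 N g)) * ?e"
    proof (rule sum_bounded_above)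
      fix x assume "x \<in> T3 N g"
      then obtain z p q \<sigma> where x: "x = (z, (p, q), \<sigma>)" "z \<in> Zgam K N g" "p \<in> {1..K}" "q \<in> {1..K}" "\<sigma> \<in> {-1, 1}"
        unfolding T3_def by auto
      show "prob (E3 N t x) \<le> ?e" unfolding x E3_def
        by (simp only: case_prod_conv, rule Ev_prob[OF N g t w_ind[OF x(2,3) g(1) N x(5)] w_ind1[OF x(2,4) g(1) N]])
    qed
    also have "\<dots> \<le> real K ^ N * real K * real K * 2 * ?e" by (intro mult_right_mono card_T3) auto
    finally show ?thesis .
  qed
  have "prob (bad N g t) \<le> prob (\<Union>x\<in>T1 N g. E1 N t x) + prob (\<Union>x\<in>T1 N g. E2 N t x) + prob (\<Union>x\<in>T3 N g. E3 N t x)"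
  proof -
    have s1: "(\<Union>x\<in>T1 N g. E1 N t x) \<in> sets M"
      by (intro sets.finite_UN finite_T1) (auto simp: E1_def intro: Ev_sets[OF N])
    have s2: "(\<Union>x\<in>T1 N g. E2 N t x) \<in> sets M"
      by (intro sets.finite_UN finite_T1) (auto simp: E2_def intro: Ev_sets[OF N])
    have s3: "(\<Union>x\<in>T3 N g. E3 N t x) \<in> sets M"
      by (intro sets.finite_UN finite_T3) (auto simp: E3_def intro: Ev_sets[OF N])
    have "prob (bad N g t) \<le> prob ((\<Union>x\<in>T1 N g. E1 N t x) \<union> (\<Union>x\<in>T1 N g. E2 N t x)) + prob (\<Union>x\<in>T3 N g. E3 N t x)"
      unfolding bad_def by (rule measure_Un_le) (use s1 s2 s3 in auto)
    moreover have "prob ((\<Union>x\<in>T1 N g. E1 N t x) \<union> (\<Union>x\<in>T1 N g. E2 N t x)) \<le> prob (\<Union>x\<in>T1 N g. E1 N t x) + prob (\<Union>x\<in>T1 N g. E2 N t x)"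
      by (rule measure_Un_le) (use s1 s2 in auto)
    ultimately show ?thesis by linarith
  qed
  also have "\<dots> \<le> (real K ^ N * real K * 2 ^ N + real K ^ N * real K * 2 ^ N + real K ^ N * real K * real K * 2) * ?e"
    using p1 p2 p3 by (simp add: algebra_simps)
  also have "\<dots> \<le> 4 * real K ^ (N + 2) * 2 ^ N * ?e"
  proof (rule mult_right_mono)
    have K1: "real K \<ge> 1" using K2 by simp
    have a0: "real K ^ N * real K \<le> real K ^ (N + 2)"
    proof -
      have "real K ^ N * real K * 1 \<le> real K ^ N * real K * real K" using K1 by (intro mult_left_mono) auto
      then show ?thesis by (simp add: power_add power2_eq_square mult_ac)
    qed
    have a: "real K ^ N * real K * 2 ^ N \<le> real K ^ (N + 2) * 2 ^ N"
      using a0 by (intro mult_right_mono) auto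
    have b: "real K ^ N * real K * real K * 2 \<le> real K ^ (N + 2) * 2 ^ N * 2"
    proof -
      have "(2::real) \<le> 2 ^ N * 2" using N by (simp add: one_le_power)
      then have "real K ^ N * real K * real K * 2 \<le> real K ^ N * real K * real K * (2 ^ N * 2)"
        by (intro mult_left_mono) auto
      then show ?thesis by (simp add: power_add power2_eq_square mult_ac)
    qed
    show "real K ^ N * real K * 2 ^ N + real K ^ N * real K * 2 ^ N + real K ^ N * real K * real K * 2 \<le> 4 * real K ^ (N + 2) * 2 ^ N"
    proof -
      define A where "A = real K ^ N * real K * 2 ^ N"
      define B where "B = real K ^ N * real K * real K * 2"
      define C where "C = real K ^ (N + 2) * 2 ^ N"
      have "A \<le> C" "B \<le> C * 2" using a b unfolding A_def B_def C_def by simp_all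
      then have "A + A + B \<le> 4 * C" by linarith
      then show ?thesis unfolding A_def B_def C_def by (simp add: mult_ac)
    qed
  qed simp
  finally show ?thesis .
qed

end

context sbm begin

lemma not_Ev: "\<omega> \<in> space M \<Longrightarrow> \<omega> \<notin> Ev N t \<alpha> \<beta> \<Longrightarrow> (\<Sum>i\<in>{1..N}. \<Sum>j\<in>{1..N}. \<alpha> i * \<beta> j * Dm N \<omega> i j) < t"
  unfolding Ev_def by auto

lemma good:
  assumes N: "N \<ge> 1" and g: "0 < g" "g \<le> 1" and t: "t > 0" and \<omega>: "\<omega> \<in> space M"
    and nb: "\<omega> \<notin> bad N g t" and z: "z \<in> Zgam K N g"
  shows "devL K N (Dm N \<omega>) z \<le> (2 * real K + 2 * real K ^ 2) * t"
    and "\<forall>p\<in>{1..K}. \<forall>q\<in>{1..K}. \<bar>P_hat N (Dm N \<omega>) z p q\<bar> < t"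
proof -
  define D where "D = Dm N \<omega>"
  have zl: "z \<in> labels K N" using z Zgam_sub by auto
  have mu: "(1 / real N) * (\<Sum>i\<in>{1..N}. \<bar>mu_hat N D z i q\<bar>) < t" if q: "q \<in> {1..K}" for q
  proof -
    define s :: "nat \<Rightarrow> real" where "s = (\<lambda>i. if i \<in> {1..N} then (if 0 \<le> mu_hat N D z i q then 1 else -1) else undefined)"
    have s: "s \<in> signs N" unfolding signs_def s_def by (auto simp: PiE_iff extensional_def)
    have "(z, q, s) \<in> T1 N g" unfolding T1_def using z q s by auto
    then have "\<omega> \<notin> E1 N t (z, q, s)" using nb unfolding bad_def by blast
    then have lt: "(\<Sum>i\<in>{1..N}. \<Sum>j\<in>{1..N}. (s i / real N) * (ind z q j / real (Ncl N z q)) * D i j) < t"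
      unfolding E1_def D_def case_prod_conv by (rule not_Ev[OF \<omega>])
    have "(\<Sum>i\<in>{1..N}. \<Sum>j\<in>{1..N}. (s i / real N) * (ind z q j / real (Ncl N z q)) * D i j)
        = (\<Sum>i\<in>{1..N}. (s i / real N) * mu_hat N D z i q)"
      unfolding mu_rep by (simp add: sum_distrib_left mult.assoc)
    also have "\<dots> = (\<Sum>i\<in>{1..N}. \<bar>mu_hat N D z i q\<bar> / real N)"
      by (intro sum.cong refl) (auto simp: s_def)
    also have "\<dots> = (1 / real N) * (\<Sum>i\<in>{1..N}. \<bar>mu_hat N D z i q\<bar>)"
      by (simp add: sum_divide_distrib)
    finally show ?thesis using lt by simp
  qed
  have nu: "(1 / real N) * (\<Sum>i\<in>{1..N}. \<bar>nu_hat N D z q i\<bar>) < t" if q: "q \<in> {1..K}" for q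
  proof -
    define s :: "nat \<Rightarrow> real" where "s = (\<lambda>i. if i \<in> {1..N} then (if 0 \<le> nu_hat N D z q i then 1 else -1) else undefined)"
    have s: "s \<in> signs N" unfolding signs_def s_def by (auto simp: PiE_iff extensional_def)
    have "(z, q, s) \<in> T1 N g" unfolding T1_def using z q s by auto
    then have "\<omega> \<notin> E2 N t (z, q, s)" using nb unfolding bad_def by blast
    then have lt: "(\<Sum>i\<in>{1..N}. \<Sum>j\<in>{1..N}. (ind z q i / real (Ncl N z q)) * (s j / real N) * D i j) < t"
      unfolding E2_def D_def case_prod_conv by (rule not_Ev[OF \<omega>])
    have "(\<Sum>i\<in>{1..N}. \<Sum>j\<in>{1..N}. (ind z q i / real (Ncl N z q)) * (s j / real N) * D i j)
        = (\<Sum>j\<in>{1..N}. \<Sum>i\<in>{1..N}. (s j / real N) * ((ind z q i / real (Ncl N z q)) * D i j))"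
      by (subst sum.swap) (simp add: mult_ac)
    also have "\<dots> = (\<Sum>j\<in>{1..N}. (s j / real N) * nu_hat N D z q j)"
      unfolding nu_rep by (simp add: sum_distrib_left)
    also have "\<dots> = (\<Sum>i\<in>{1..N}. \<bar>nu_hat N D z q i\<bar> / real N)"
      by (intro sum.cong refl) (auto simp: s_def)
    also have "\<dots> = (1 / real N) * (\<Sum>i\<in>{1..N}. \<bar>nu_hat N D z q i\<bar>)"
      by (simp add: sum_divide_distrib)
    finally show ?thesis using lt by simp
  qed
  have P: "\<bar>P_hat N D z p q\<bar> < t" if p: "p \<in> {1..K}" and q: "q \<in> {1..K}" for p q
  proof -
    have sig: "\<sigma> * P_hat N D z p q < t" if \<sigma>: "\<sigma> \<in> {-1, 1}" for \<sigma>
    proof -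
      have "(z, (p, q), \<sigma>) \<in> T3 N g" unfolding T3_def using z p q \<sigma> by auto
      then have "\<omega> \<notin> E3 N t (z, (p, q), \<sigma>)" using nb unfolding bad_def by blast
      then have lt: "(\<Sum>i\<in>{1..N}. \<Sum>j\<in>{1..N}. (\<sigma> * ind z p i / real (Ncl N z p)) * (ind z q j / real (Ncl N z q)) * D i j) < t"
        unfolding E3_def D_def case_prod_conv by (rule not_Ev[OF \<omega>])
      have "\<sigma> * P_hat N D z p q = (\<Sum>i\<in>{1..N}. \<Sum>j\<in>{1..N}. (\<sigma> * ind z p i / real (Ncl N z p)) * (ind z q j / real (Ncl N z q)) * D i j)"
        unfolding P_rep by (simp add: sum_distrib_left mult_ac)
      then show ?thesis using lt by simp
    qed
    show ?thesis using sig[of 1] sig[of "-1"] by auto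
  qed
  then show "\<forall>p\<in>{1..K}. \<forall>q\<in>{1..K}. \<bar>P_hat N (Dm N \<omega>) z p q\<bar> < t" unfolding D_def by blast
  have "devL K N D z \<le> (\<Sum>q\<in>{1..K}. (1 / real N) * (\<Sum>i\<in>{1..N}. \<bar>mu_hat N D z i q\<bar>))
     + (\<Sum>q\<in>{1..K}. (1 / real N) * (\<Sum>i\<in>{1..N}. \<bar>nu_hat N D z q i\<bar>))
     + 2 * (\<Sum>p\<in>{1..K}. \<Sum>q\<in>{1..K}. \<bar>P_hat N D z p q\<bar>)"
    by (rule devL_split[OF zl N])
  also have "\<dots> \<le> real K * t + real K * t + 2 * (real K * (real K * t))"
  proof -
    have "(\<Sum>q\<in>{1..K}. (1 / real N) * (\<Sum>i\<in>{1..N}. \<bar>mu_hat N D z i q\<bar>)) \<le> real (card {1..K}) * t"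
      by (rule sum_bounded_above, rule less_imp_le, rule mu) auto
    moreover have "(\<Sum>q\<in>{1..K}. (1 / real N) * (\<Sum>i\<in>{1..N}. \<bar>nu_hat N D z q i\<bar>)) \<le> real (card {1..K}) * t"
      by (rule sum_bounded_above, rule less_imp_le, rule nu) auto
    moreover have "(\<Sum>p\<in>{1..K}. \<Sum>q\<in>{1..K}. \<bar>P_hat N D z p q\<bar>) \<le> real (card {1..K}) * (real (card {1..K}) * t)"
      by (rule sum_bounded_above, rule sum_bounded_above, rule less_imp_le, rule P) auto
    ultimately show ?thesis by (simp only: card_atLeastAtMost diff_Suc_1)
  qed
  also have "\<dots> = (2 * real K + 2 * real K ^ 2) * t" by (simp add: algebra_simps power2_eq_square)
  finally show "devL K N (Dm N \<omega>) z \<le> (2 * real K + 2 * real K ^ 2) * t" unfolding D_def .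
qed

end

context sbm begin

definition cB :: real where "cB = 1 + ln (8 * real K ^ 3)"
definition tt :: "real \<Rightarrow> nat \<Rightarrow> real" where "tt g N = sqrt (cB / (2 * g\<^sup>2 * real N))"

lemma cB_pos: "cB > 0"
proof -
  have "real K ^ 3 \<ge> 1" using K2 by (simp add: one_le_power)
  then have "8 * real K ^ 3 \<ge> 1" by linarith
  then have "ln (8 * real K ^ 3) \<ge> 0" by simp
  then show ?thesis unfolding cB_def by simp
qed

lemma tt_pos: "0 < g \<Longrightarrow> N \<ge> 1 \<Longrightarrow> tt g N > 0"
  unfolding tt_def using cB_pos by simp

lemma tt_eq: "0 < g \<Longrightarrow> N \<ge> 1 \<Longrightarrow> tt g N = sqrt (cB / (2 * g\<^sup>2)) / sqrt (real N)"
  unfolding tt_def by (simp add: real_sqrt_divide[symmetric] field_simps)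

lemma tt_prob:
  assumes N: "N \<ge> 1" and g: "0 < g" "g \<le> 1"
  shows "prob (bad N g (tt g N)) \<le> exp (- real N)"
proof -
  have t: "tt g N > 0" using tt_pos g N by simp
  have e: "2 * (tt g N)\<^sup>2 * (g * real N)\<^sup>2 = cB * real N"
    unfolding tt_def using cB_pos g N by (simp add: power_mult_distrib field_simps power2_eq_square)
  have A: "prob (bad N g (tt g N)) \<le> 4 * real K ^ (N + 2) * 2 ^ N * exp (- (cB * real N))"
    using bad_prob[OF N g t] e by simp
  have B: "4 * real K ^ (N + 2) * 2 ^ N \<le> (8 * real K ^ 3) ^ N"
  proof -
    have K1: "real K \<ge> 1" using K2 by simp
    have h1: "1 \<le> 4 * real K ^ 2"
    proof -
      have "1 \<le> real K ^ 2" using K1 by (simp add: one_le_power)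
      then show ?thesis by linarith
    qed
    have "(4 * real K ^ 2) ^ 1 \<le> (4 * real K ^ 2) ^ N"
      by (rule power_increasing) (use N h1 in auto)
    then have "4 * real K ^ 2 \<le> (4 * real K ^ 2) ^ N" by simp
    then have "4 * real K ^ 2 * (real K ^ N * 2 ^ N) \<le> (4 * real K ^ 2) ^ N * (real K ^ N * 2 ^ N)"
      by (intro mult_right_mono) auto
    also have "\<dots> = (4 * real K ^ 2 * real K * 2) ^ N"
      by (simp only: power_mult_distrib mult.assoc)
    also have "4 * real K ^ 2 * real K * 2 = 8 * real K ^ 3"
      by (simp add: power2_eq_square power3_eq_cube)
    finally have f: "4 * real K ^ 2 * (real K ^ N * 2 ^ N) \<le> (8 * real K ^ 3) ^ N" .
    have eq: "4 * real K ^ (N + 2) * 2 ^ N = 4 * real K ^ 2 * (real K ^ N * 2 ^ N)"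
      by (simp only: power_add mult_ac)
    show ?thesis unfolding eq by (rule f)
  qed
  have C: "(8 * real K ^ 3) ^ N * exp (- (cB * real N)) = exp (- real N)"
  proof -
    have pos: "8 * real K ^ 3 > 0" using K2 by simp
    have "(8 * real K ^ 3) ^ N = exp (real N * ln (8 * real K ^ 3))"
      using powr_realpow[OF pos, of N] pos unfolding powr_def by (simp add: mult_ac)
    then show ?thesis unfolding cB_def by (simp add: exp_add[symmetric] algebra_simps)
  qed
  have "4 * real K ^ (N + 2) * 2 ^ N * exp (- (cB * real N)) \<le> (8 * real K ^ 3) ^ N * exp (- (cB * real N))"
    using B by (intro mult_right_mono) auto
  then show ?thesis using A C by linarith
qed

lemma mm_D: "(\<lambda>i j. X N i j \<omega> - mm N i j) = Dm N \<omega>"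
  unfolding Dm_def mm_def by simp

lemma main_event:
  assumes N: "N \<ge> 1" and g: "0 < g" "g \<le> 1" and t: "t > 0" and \<omega>: "\<omega> \<in> space M"
    and nb: "\<omega> \<notin> bad N g t" and zh: "zh \<in> Zgam K N g" and zs: "zstar N \<in> Zgam K N g"
    and amin: "L_hat K N (\<lambda>i j. X N i j \<omega>) zh \<le> L_hat K N (\<lambda>i j. X N i j \<omega>) (zstar N)"
    and d: "0 < \<delta>" "\<delta> \<le> sep K (P_hat N (mm N) zh)"
  shows "Delta K N (zstar N) zh \<le> 8 * ((2 * real K + 2 * real K ^ 2) * t) / \<delta>"
proof -
  let ?c = "(2 * real K + 2 * real K ^ 2) * t"
  have dh: "\<bar>L_hat K N (\<lambda>i j. X N i j \<omega>) zh - L_hat K N (mm N) zh\<bar> \<le> ?c"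
    using L_diff[of K N "\<lambda>i j. X N i j \<omega>" zh "mm N"] good(1)[OF N g t \<omega> nb zh] unfolding mm_D by linarith
  have ds: "\<bar>L_hat K N (\<lambda>i j. X N i j \<omega>) (zstar N) - L_hat K N (mm N) (zstar N)\<bar> \<le> ?c"
    using L_diff[of K N "\<lambda>i j. X N i j \<omega>" "zstar N" "mm N"] good(1)[OF N g t \<omega> nb zs] unfolding mm_D by linarith
  have z0: "L_hat K N (mm N) (zstar N) = 0"
    by (rule L_zero[OF zstar_lab[OF N]]) (simp add: mm_def)
  have Lm: "L_hat K N (mm N) zh \<le> 2 * ?c" using dh ds z0 amin by linarith
  have "Delta K N (zstar N) zh \<le> 4 * L_hat K N (mm N) zh / \<delta>"
    by (rule stab[OF N K2 zstar_lab[OF N] _ d]) (use zh Zgam_sub in \<open>auto simp: mm_def\<close>)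
  also have "\<dots> \<le> 4 * (2 * ?c) / \<delta>" by (rule divide_right_mono) (use Lm d in linarith)+
  finally show ?thesis by simp
qed

end

lemma KMat_sum: "(\<And>x. x \<in> S \<Longrightarrow> F x \<in> KMat K) \<Longrightarrow> (\<lambda>a b. \<Sum>x\<in>S. F x a b) \<in> KMat K"
  unfolding KMat_def by (auto intro: sum.neutral)

lemma norm_sum:
  assumes n: "is_mat_norm K nrm" and fin: "finite S"
  shows "(\<And>x. x \<in> S \<Longrightarrow> F x \<in> KMat K) \<Longrightarrow> nrm (\<lambda>a b. \<Sum>x\<in>S. F x a b) \<le> (\<Sum>x\<in>S. nrm (F x))"
  using fin
proof (induction S rule: finite_induct)
  case empty
  have "(\<lambda>a b. 0::real) \<in> KMat K" unfolding KMat_def by simp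
  then have "nrm (\<lambda>a b. 0) = 0" using n unfolding is_mat_norm_def by blast
  then show ?case by simp
next
  case (insert x S)
  have Fx: "F x \<in> KMat K" using insert by auto
  have FS: "(\<lambda>a b. \<Sum>x\<in>S. F x a b) \<in> KMat K" using insert by (intro KMat_sum) auto
  have "nrm (\<lambda>a b. \<Sum>y\<in>insert x S. F y a b) = nrm (\<lambda>a b. F x a b + (\<Sum>y\<in>S. F y a b))"
    using insert by simp
  also have "\<dots> \<le> nrm (F x) + nrm (\<lambda>a b. \<Sum>y\<in>S. F y a b)"
  proof -
    have "\<forall>A\<in>KMat K. \<forall>B\<in>KMat K. nrm (\<lambda>p q. A p q + B p q) \<le> nrm A + nrm B"
      using n unfolding is_mat_norm_def by blast
    from this[rule_format, OF Fx FS] show ?thesis by simp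
  qed
  also have "\<dots> \<le> nrm (F x) + (\<Sum>y\<in>S. nrm (F y))" using insert by auto
  finally show ?case using insert by simp
qed

definition Emat :: "nat \<Rightarrow> nat \<Rightarrow> nat \<Rightarrow> nat \<Rightarrow> real" where
  "Emat p q = (\<lambda>a b. if a = p \<and> b = q then 1 else 0)"

lemma norm_restrict:
  assumes n: "is_mat_norm K nrm" and D: "\<And>p q. p \<in> {1..K} \<Longrightarrow> q \<in> {1..K} \<Longrightarrow> \<bar>D p q\<bar> \<le> \<tau>"
  shows "nrm (restrictK K D) \<le> (\<Sum>pq\<in>{1..K} \<times> {1..K}. nrm (Emat (fst pq) (snd pq))) * \<tau>"
proof -
  let ?S = "{1..K} \<times> {1..K}"
  let ?F = "\<lambda>pq a b. D (fst pq) (snd pq) * Emat (fst pq) (snd pq) a b"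
  have E: "Emat p q \<in> KMat K" if "p \<in> {1..K}" "q \<in> {1..K}" for p q
    using that unfolding KMat_def Emat_def by auto
  have FK: "?F pq \<in> KMat K" if "pq \<in> ?S" for pq
    using E[of "fst pq" "snd pq"] that unfolding KMat_def by auto
  have eq: "restrictK K D = (\<lambda>a b. \<Sum>pq\<in>?S. ?F pq a b)"
  proof (intro ext)
    fix a b
    show "restrictK K D a b = (\<Sum>pq\<in>?S. ?F pq a b)"
    proof (cases "a \<in> {1..K} \<and> b \<in> {1..K}")
      case True
      have "(\<Sum>pq\<in>?S. ?F pq a b) = (\<Sum>pq\<in>?S. if pq = (a, b) then D a b else 0)"
        by (intro sum.cong refl) (auto simp: Emat_def)
      also have "\<dots> = D a b" using True by (simp add: sum.delta')
      moreover have "restrictK K D a b = D a b" unfolding restrictK_def using True by simp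
      ultimately show ?thesis by simp
    next
      case False
      have "(\<Sum>pq\<in>?S. ?F pq a b) = 0"
      proof (intro sum.neutral ballI)
        fix pq assume pq: "pq \<in> ?S"
        have "Emat (fst pq) (snd pq) a b = 0"
        proof (cases "a = fst pq \<and> b = snd pq")
          case True
          then show ?thesis using pq False by auto
        qed (auto simp: Emat_def)
        then show "?F pq a b = 0" by simp
      qed
      moreover have "restrictK K D a b = 0" unfolding restrictK_def by (rule if_not_P[OF False])
      ultimately show ?thesis by simp
    qed
  qed
  have "nrm (restrictK K D) \<le> (\<Sum>pq\<in>?S. nrm (?F pq))"
    unfolding eq by (rule norm_sum[OF n]) (use FK in auto)
  also have "\<dots> \<le> (\<Sum>pq\<in>?S. nrm (Emat (fst pq) (snd pq)) * \<tau>)"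
  proof (intro sum_mono)
    fix pq assume pq: "pq \<in> ?S"
    have Ek: "Emat (fst pq) (snd pq) \<in> KMat K" using E pq by auto
    have "nrm (?F pq) = \<bar>D (fst pq) (snd pq)\<bar> * nrm (Emat (fst pq) (snd pq))"
      using n Ek unfolding is_mat_norm_def by blast
    also have "\<dots> \<le> \<tau> * nrm (Emat (fst pq) (snd pq))"
      using n Ek D[of "fst pq" "snd pq"] pq unfolding is_mat_norm_def by (auto intro: mult_right_mono)
    finally show "nrm (?F pq) \<le> nrm (Emat (fst pq) (snd pq)) * \<tau>" by (simp add: mult_ac)
  qed
  also have "\<dots> = (\<Sum>pq\<in>?S. nrm (Emat (fst pq) (snd pq))) * \<tau>" by (simp add: sum_distrib_right)
  finally show ?thesis .
qed

context sbm begin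

lemma bc:
  assumes g: "0 < g" "g \<le> 1"
  shows "AE \<omega> in M. eventually (\<lambda>n. \<omega> \<notin> bad n g (tt g n)) sequentially"
proof -
  define A where "A n = (if n \<ge> 1 then bad n g (tt g n) else {})" for n
  have As: "A n \<in> sets M" for n unfolding A_def using bad_sets by auto
  have Af: "emeasure M (A n) < \<infinity>" for n by (simp add: emeasure_eq_measure)
  have Ab: "prob (A n) \<le> exp (- real n)" for n
    unfolding A_def using tt_prob[of n g] g by auto
  have sg: "summable (\<lambda>n. exp (- real n))"
  proof -
    have "(\<lambda>n. exp (- real n)) = (\<lambda>n. exp (-1) ^ n)"
      using exp_of_nat_mult[of _ "-1::real"] by (auto simp: fun_eq_iff)
    moreover have "summable (\<lambda>n. (exp (-1::real)) ^ n)" by (rule summable_geometric) simp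
    ultimately show ?thesis by simp
  qed
  have sA: "summable (\<lambda>n. prob (A n))"
    by (rule summable_comparison_test[OF _ sg]) (use Ab in auto)
  have "AE \<omega> in M. eventually (\<lambda>n. \<omega> \<in> space M - A n) sequentially"
    by (rule borel_cantelli_AE1[OF As Af sA])
  then show ?thesis
  proof (rule AE_mp[OF _ AE_I2], intro impI)
    fix \<omega> assume "eventually (\<lambda>n. \<omega> \<in> space M - A n) sequentially"
    then show "eventually (\<lambda>n. \<omega> \<notin> bad n g (tt g n)) sequentially"
      using eventually_ge_at_top[of 1] by eventually_elim (auto simp: A_def)
  qed
qed

lemma tt_lim:
  assumes g: "0 < g"
  shows "(\<lambda>n. c * tt g n) \<longlonglongrightarrow> 0"
proof -
  have "(\<lambda>n. c * sqrt (cB / (2 * g\<^sup>2)) / sqrt (real n)) \<longlonglongrightarrow> 0"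
    by (rule tendsto_divide_0[OF tendsto_const])
       (rule filterlim_at_top_imp_at_infinity, rule filterlim_compose[OF sqrt_at_top filterlim_real_sequentially])
  moreover have "eventually (\<lambda>n. c * sqrt (cB / (2 * g\<^sup>2)) / sqrt (real n) = c * tt g n) sequentially"
    using eventually_ge_at_top[of 1] by eventually_elim (use tt_eq g in simp)
  ultimately show ?thesis by (rule Lim_transform_eventually)
qed

end

lemma Delta_nonneg: "K \<ge> 2 \<Longrightarrow> Delta K N z z' \<ge> 0"
  unfolding Delta_def by (intro mult_nonneg_nonneg divide_nonneg_nonneg) auto

lemma restrictK_KMat: "restrictK K D \<in> KMat K"
  unfolding restrictK_def KMat_def by auto

theorem theorem1:
  fixes M :: "'a measure"
    and K :: nat
    and Pstar :: "nat \<Rightarrow> nat \<Rightarrow> real"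
    and zstar :: "nat \<Rightarrow> nat \<Rightarrow> nat"
    and X :: "nat \<Rightarrow> nat \<Rightarrow> nat \<Rightarrow> 'a \<Rightarrow> real"
    and zhat :: "nat \<Rightarrow> 'a \<Rightarrow> nat \<Rightarrow> nat"
  assumes P: "prob_space M"
    and K2: "K \<ge> 2"
    and zstar_lab: "\<And>N. N \<ge> 1 \<Longrightarrow> zstar N \<in> labels K N"
    and indep: "\<And>N. N \<ge> 1 \<Longrightarrow>
        prob_space.indep_vars M (\<lambda>_. borel) (\<lambda>(i, j). X N i j) ({1..N} \<times> {1..N})"
    and range01: "\<And>N i j \<omega>. N \<ge> 1 \<Longrightarrow> i \<in> {1..N} \<Longrightarrow> j \<in> {1..N} \<Longrightarrow> \<omega> \<in> space M \<Longrightarrow>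
        0 \<le> X N i j \<omega> \<and> X N i j \<omega> \<le> 1"
    and ident: "\<And>N i j i' j'. N \<ge> 1 \<Longrightarrow> i \<in> {1..N} \<Longrightarrow> j \<in> {1..N} \<Longrightarrow>
        i' \<in> {1..N} \<Longrightarrow> j' \<in> {1..N} \<Longrightarrow>
        zstar N i = zstar N i' \<Longrightarrow> zstar N j = zstar N j' \<Longrightarrow>
        distr M borel (X N i j) = distr M borel (X N i' j')"
    and mean: "\<And>N i j. N \<ge> 1 \<Longrightarrow> i \<in> {1..N} \<Longrightarrow> j \<in> {1..N} \<Longrightarrow>
        (\<integral>\<omega>. X N i j \<omega> \<partial>M) = Pstar (zstar N i) (zstar N j)"
    and A1: "sep K Pstar > 0"
    and A2: "\<exists>\<gamma>. 0 < \<gamma> \<and> \<gamma> \<le> 1 / real K \<and>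
        (\<forall>\<gamma>'. 0 < \<gamma>' \<and> \<gamma>' < \<gamma> \<longrightarrow> (\<forall>\<^sub>F N in sequentially. zstar N \<in> Zgam K N \<gamma>'))"
    and zhat_meas: "\<And>N z. N \<ge> 1 \<Longrightarrow> z \<in> labels K N \<Longrightarrow>
        {\<omega> \<in> space M. zhat N \<omega> = z} \<in> sets M"
    and zhat_argmin: "\<And>N \<omega>. N \<ge> 1 \<Longrightarrow> \<omega> \<in> space M \<Longrightarrow>
        zhat N \<omega> \<in> labels K N \<and>
        (\<forall>z\<in>labels K N. L_hat K N (\<lambda>i j. X N i j \<omega>) (zhat N \<omega>)
                          \<le> L_hat K N (\<lambda>i j. X N i j \<omega>) z)"
    and zhat_good: "\<exists>\<gamma>0 \<delta>0 N1. 0 < \<gamma>0 \<and> \<gamma>0 \<le> 1 / real K \<and> 0 < \<delta>0 \<and>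
        (\<forall>N\<ge>N1. AE \<omega> in M. zhat N \<omega> \<in> Zgam K N \<gamma>0 \<and>
                    delta_bar M K N (X N) (zhat N \<omega>) \<ge> \<delta>0)"
  shows "(AE \<omega> in M. (\<lambda>N. Delta K N (zstar N) (zhat N \<omega>)) \<longlonglongrightarrow> 0)
    \<and> (\<forall>\<gamma>0 \<delta>0 N1. (0 < \<gamma>0 \<and> \<gamma>0 \<le> 1 / real K \<and> 0 < \<delta>0 \<and>
          (\<forall>N\<ge>N1. AE \<omega> in M. zhat N \<omega> \<in> Zgam K N \<gamma>0 \<and>
                    delta_bar M K N (X N) (zhat N \<omega>) \<ge> \<delta>0)) \<longrightarrow>
        (\<forall>\<gamma>'. 0 < \<gamma>' \<and> \<gamma>' < \<gamma>0 \<longrightarrow>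
          (\<forall>nrm. is_mat_norm K nrm \<longrightarrow>
            (AE \<omega> in M. (\<lambda>N. Max ((\<lambda>z. nrm (restrictK K (\<lambda>p q.
                 P_hat N (\<lambda>i j. X N i j \<omega>) z p q - P_bar M N (X N) z p q))) ` Zgam K N \<gamma>'))
               \<longlonglongrightarrow> 0))))
    \<and> (\<forall>r. 0 < r \<and> r < 1 / 3 \<longrightarrow>
        (\<exists>C > 0. \<exists>N0. \<forall>N\<ge>N0.
          prob_space.prob M {\<omega> \<in> space M. Delta K N (zstar N) (zhat N \<omega>) \<le> C * real N powr (- r)}
            \<ge> 1 - exp (- real N)))"
proof -
  interpret S: sbm M K Pstar zstar X
    by (intro sbm.intro sbm_axioms.intro P) (use K2 zstar_lab indep range01 mean in auto)
  have K1: "real K \<ge> 2" using K2 by simp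
  have Kinv: "1 / real K \<le> 1" using K1 by simp
  have dbar: "delta_bar M K N (X N) z = sep K (P_hat N (S.mm N) z)" if "N \<ge> 1" for N z
  proof -
    have "P_bar M N (X N) z = P_hat N (S.mm N) z" using S.Pbar_eq[OF that] by (intro ext) auto
    then show ?thesis unfolding delta_bar_def by simp
  qed
  obtain \<gamma>0 \<delta>0 N1 where g0: "0 < \<gamma>0" "\<gamma>0 \<le> 1 / real K" "0 < \<delta>0"
    and good0: "\<forall>N\<ge>N1. AE \<omega> in M. zhat N \<omega> \<in> Zgam K N \<gamma>0 \<and> delta_bar M K N (X N) (zhat N \<omega>) \<ge> \<delta>0"
    using zhat_good by blast
  obtain \<gamma>A where gA: "0 < \<gamma>A" "\<gamma>A \<le> 1 / real K"
    and A2': "\<forall>\<gamma>'. 0 < \<gamma>' \<and> \<gamma>' < \<gamma>A \<longrightarrow> (\<forall>\<^sub>F N in sequentially. zstar N \<in> Zgam K N \<gamma>')"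
    using A2 by blast
  have "\<forall>\<^sub>F N in sequentially. zstar N \<in> Zgam K N (\<gamma>A / 2)" using A2' gA by auto
  then obtain N2 where N2: "\<And>N. N \<ge> N2 \<Longrightarrow> zstar N \<in> Zgam K N (\<gamma>A / 2)"
    unfolding eventually_sequentially by blast
  define \<gamma>1 where "\<gamma>1 = min \<gamma>0 (\<gamma>A / 2)"
  have g1: "0 < \<gamma>1" "\<gamma>1 \<le> 1" "\<gamma>1 \<le> \<gamma>0" "\<gamma>1 \<le> \<gamma>A / 2"
    unfolding \<gamma>1_def using g0 gA Kinv by auto
  define N0 where "N0 = max (max N1 N2) 1"
  define c1 where "c1 = 2 * real K + 2 * real K ^ 2"
  define C0 where "C0 = 8 * (c1 * sqrt (S.cB / (2 * \<gamma>1\<^sup>2))) / \<delta>0"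
  have c1pos: "c1 > 0" unfolding c1_def using K1 by (simp add: add_pos_nonneg)
  have sqpos: "sqrt (S.cB / (2 * \<gamma>1\<^sup>2)) > 0" using S.cB_pos g1 by simp
  have C0pos: "C0 > 0" unfolding C0_def using c1pos sqpos g0(3) by simp
  have key: "Delta K N (zstar N) (zhat N \<omega>) \<le> C0 / sqrt (real N)"
    if N: "N \<ge> N0" and \<omega>: "\<omega> \<in> space M" and nb: "\<omega> \<notin> S.bad N \<gamma>1 (S.tt \<gamma>1 N)"
      and zg: "zhat N \<omega> \<in> Zgam K N \<gamma>0" and dg: "delta_bar M K N (X N) (zhat N \<omega>) \<ge> \<delta>0" for N \<omega>
  proof -
    have N1': "N \<ge> 1" using N unfolding N0_def by auto
    have zh: "zhat N \<omega> \<in> Zgam K N \<gamma>1" using zg Zgam_mono[OF g1(3)] by auto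
    have zs: "zstar N \<in> Zgam K N \<gamma>1" using N2[of N] N Zgam_mono[OF g1(4)] unfolding N0_def by auto
    have amin: "L_hat K N (\<lambda>i j. X N i j \<omega>) (zhat N \<omega>) \<le> L_hat K N (\<lambda>i j. X N i j \<omega>) (zstar N)"
      using zhat_argmin[OF N1' \<omega>] zstar_lab[OF N1'] by blast
    have d: "\<delta>0 \<le> sep K (P_hat N (S.mm N) (zhat N \<omega>))" using dg dbar[OF N1'] by simp
    have "Delta K N (zstar N) (zhat N \<omega>) \<le> 8 * (c1 * S.tt \<gamma>1 N) / \<delta>0"
      unfolding c1_def by (rule S.main_event[OF N1' g1(1,2) S.tt_pos[OF g1(1) N1'] \<omega> nb zh zs amin g0(3) d])
    also have "\<dots> = C0 / sqrt (real N)"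
      unfolding C0_def S.tt_eq[OF g1(1) N1'] by simp
    finally show ?thesis .
  qed
  have aeN: "AE \<omega> in M. \<omega> \<notin> S.bad N \<gamma>1 (S.tt \<gamma>1 N) \<longrightarrow> Delta K N (zstar N) (zhat N \<omega>) \<le> C0 / sqrt (real N)"
    if N: "N \<ge> N0" for N
  proof -
    have "N \<ge> N1" using N unfolding N0_def by auto
    then have "AE \<omega> in M. zhat N \<omega> \<in> Zgam K N \<gamma>0 \<and> delta_bar M K N (X N) (zhat N \<omega>) \<ge> \<delta>0"
      using good0 by blast
    then show ?thesis using AE_space by eventually_elim (use key N in blast)
  qed
  have part3: "\<forall>r. 0 < r \<and> r < 1 / 3 \<longrightarrow>
        (\<exists>C > 0. \<exists>N0. \<forall>N\<ge>N0.
          prob_space.prob M {\<omega> \<in> space M. Delta K N (zstar N) (zhat N \<omega>) \<le> C * real N powr (- r)}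
            \<ge> 1 - exp (- real N))"
  proof (intro allI impI)
    fix r :: real assume r: "0 < r \<and> r < 1 / 3"
    show "\<exists>C > 0. \<exists>N0. \<forall>N\<ge>N0.
          prob_space.prob M {\<omega> \<in> space M. Delta K N (zstar N) (zhat N \<omega>) \<le> C * real N powr (- r)}
            \<ge> 1 - exp (- real N)"
    proof (intro exI[of _ C0] conjI C0pos exI[of _ N0] allI impI)
      fix N assume N: "N \<ge> N0"
      have N1': "N \<ge> 1" using N unfolding N0_def by auto
      define c where "c = C0 * real N powr (- r)"
      have sq: "C0 / sqrt (real N) \<le> c"
      proof -
        have "C0 / sqrt (real N) = C0 * real N powr (- (1/2))"
          using N1' by (simp add: powr_minus_divide powr_half_sqrt)
        also have "\<dots> \<le> C0 * real N powr (- r)"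
          using r N1' C0pos by (intro mult_left_mono powr_mono) auto
        finally show ?thesis unfolding c_def .
      qed
      let ?S = "{\<omega> \<in> space M. Delta K N (zstar N) (zhat N \<omega>) \<le> c}"
      have Seq: "?S = (\<Union>z\<in>{z \<in> labels K N. Delta K N (zstar N) z \<le> c}. {\<omega> \<in> space M. zhat N \<omega> = z})"
        using zhat_argmin[OF N1'] by auto
      have Ss: "?S \<in> sets M"
        unfolding Seq by (intro sets.finite_UN) (auto intro: zhat_meas[OF N1'] finite_subset[OF _ finite_labels])
      have bs: "S.bad N \<gamma>1 (S.tt \<gamma>1 N) \<in> sets M" by (rule S.bad_sets[OF N1'])
      have "1 - exp (- real N) \<le> 1 - S.prob (S.bad N \<gamma>1 (S.tt \<gamma>1 N))"
        using S.tt_prob[OF N1' g1(1,2)] by simp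
      also have "\<dots> = S.prob (space M - S.bad N \<gamma>1 (S.tt \<gamma>1 N))" using S.prob_compl[OF bs] by simp
      also have "\<dots> \<le> S.prob ?S"
      proof (rule S.finite_measure_mono_AE[OF _ Ss])
        show "AE x in M. x \<in> space M - S.bad N \<gamma>1 (S.tt \<gamma>1 N) \<longrightarrow> x \<in> ?S"
          using aeN[OF N] by eventually_elim (use sq in auto)
      qed
      finally show "S.prob {\<omega> \<in> space M. Delta K N (zstar N) (zhat N \<omega>) \<le> C0 * real N powr (- r)} \<ge> 1 - exp (- real N)"
        unfolding c_def .
    qed
  qed
  have part1: "AE \<omega> in M. (\<lambda>N. Delta K N (zstar N) (zhat N \<omega>)) \<longlonglongrightarrow> 0"
  proof -
    have ae1: "AE \<omega> in M. eventually (\<lambda>n. \<omega> \<notin> S.bad n \<gamma>1 (S.tt \<gamma>1 n)) sequentially"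
      by (rule S.bc[OF g1(1,2)])
    have ae2: "AE \<omega> in M. \<forall>n. n \<ge> N0 \<longrightarrow> (\<omega> \<notin> S.bad n \<gamma>1 (S.tt \<gamma>1 n) \<longrightarrow> Delta K n (zstar n) (zhat n \<omega>) \<le> C0 / sqrt (real n))"
      unfolding AE_all_countable
    proof
      fix n show "AE \<omega> in M. n \<ge> N0 \<longrightarrow> (\<omega> \<notin> S.bad n \<gamma>1 (S.tt \<gamma>1 n) \<longrightarrow> Delta K n (zstar n) (zhat n \<omega>) \<le> C0 / sqrt (real n))"
        by (cases "n \<ge> N0") (use aeN in auto)
    qed
    have lim: "(\<lambda>n. C0 / sqrt (real n)) \<longlonglongrightarrow> 0"
      by (rule tendsto_divide_0[OF tendsto_const])
         (rule filterlim_at_top_imp_at_infinity, rule filterlim_compose[OF sqrt_at_top filterlim_real_sequentially])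
    show ?thesis using ae1 ae2
    proof eventually_elim
      case (elim \<omega>)
      have ev: "eventually (\<lambda>n. Delta K n (zstar n) (zhat n \<omega>) \<le> C0 / sqrt (real n)) sequentially"
        using elim(1) eventually_ge_at_top[of N0] by eventually_elim (use elim(2) in auto)
      show ?case
        by (rule tendsto_sandwich[OF _ ev tendsto_const lim]) (intro always_eventually allI Delta_nonneg[OF K2])
    qed
  qed
  have part2: "\<forall>\<gamma>0 \<delta>0 N1. (0 < \<gamma>0 \<and> \<gamma>0 \<le> 1 / real K \<and> 0 < \<delta>0 \<and>
          (\<forall>N\<ge>N1. AE \<omega> in M. zhat N \<omega> \<in> Zgam K N \<gamma>0 \<and>
                    delta_bar M K N (X N) (zhat N \<omega>) \<ge> \<delta>0)) \<longrightarrow>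
        (\<forall>\<gamma>'. 0 < \<gamma>' \<and> \<gamma>' < \<gamma>0 \<longrightarrow>
          (\<forall>nrm. is_mat_norm K nrm \<longrightarrow>
            (AE \<omega> in M. (\<lambda>N. Max ((\<lambda>z. nrm (restrictK K (\<lambda>p q.
                 P_hat N (\<lambda>i j. X N i j \<omega>) z p q - P_bar M N (X N) z p q))) ` Zgam K N \<gamma>'))
               \<longlonglongrightarrow> 0)))"
  proof (intro allI impI)
    fix g0' d0' N1' g' nrm
    assume h: "0 < g0' \<and> g0' \<le> 1 / real K \<and> 0 < d0' \<and>
          (\<forall>N\<ge>N1'. AE \<omega> in M. zhat N \<omega> \<in> Zgam K N g0' \<and> delta_bar M K N (X N) (zhat N \<omega>) \<ge> d0')"
      and g': "0 < g' \<and> g' < g0'" and n: "is_mat_norm K nrm"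
    have g'1: "0 < g'" "g' \<le> 1" using g' h Kinv by auto
    have ne: "Zgam K N g' \<noteq> {}" if N: "N \<ge> N1'" for N
    proof
      assume e: "Zgam K N g' = {}"
      have "Zgam K N g0' \<subseteq> Zgam K N g'" by (rule Zgam_mono) (use g' in auto)
      with e have e0: "Zgam K N g0' = {}" by auto
      have "AE \<omega> in M. zhat N \<omega> \<in> Zgam K N g0'" using h N by auto
      then have "AE \<omega> in M. False" unfolding e0 by simp
      then show False using S.AE_False by simp
    qed
    define Cn where "Cn = (\<Sum>pq\<in>{1..K} \<times> {1..K}. nrm (Emat (fst pq) (snd pq)))"
    define F where "F N \<omega> = Max ((\<lambda>z. nrm (restrictK K (\<lambda>p q.
                 P_hat N (\<lambda>i j. X N i j \<omega>) z p q - P_bar M N (X N) z p q))) ` Zgam K N g')" for N \<omega>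
    have bnd: "0 \<le> F N \<omega> \<and> F N \<omega> \<le> Cn * S.tt g' N"
      if N: "N \<ge> max N1' 1" and \<omega>: "\<omega> \<in> space M" and nb: "\<omega> \<notin> S.bad N g' (S.tt g' N)" for N \<omega>
    proof -
      have N1: "N \<ge> 1" using N by auto
      have each: "nrm (restrictK K (\<lambda>p q. P_hat N (\<lambda>i j. X N i j \<omega>) z p q - P_bar M N (X N) z p q)) \<le> Cn * S.tt g' N"
        if z: "z \<in> Zgam K N g'" for z
      proof -
        have eq: "(\<lambda>p q. P_hat N (\<lambda>i j. X N i j \<omega>) z p q - P_bar M N (X N) z p q) = P_hat N (S.Dm N \<omega>) z"
          by (intro ext) (simp add: S.Pbar_eq[OF N1] P_lin[symmetric] S.mm_D)
        have ltP: "\<forall>p\<in>{1..K}. \<forall>q\<in>{1..K}. \<bar>P_hat N (S.Dm N \<omega>) z p q\<bar> < S.tt g' N"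
          by (rule S.good(2)[OF N1 g'1 S.tt_pos[OF g'1(1) N1] \<omega> nb z])
        have "nrm (restrictK K (P_hat N (S.Dm N \<omega>) z)) \<le> Cn * S.tt g' N"
          unfolding Cn_def by (rule norm_restrict[OF n], rule less_imp_le) (use ltP in blast)
        then show ?thesis unfolding eq .
      qed
      have fin: "finite (Zgam K N g')" by (rule finite_Zgam)
      have nem: "Zgam K N g' \<noteq> {}" using ne N by auto
      then obtain z0 where z0: "z0 \<in> Zgam K N g'" by blast
      have "0 \<le> nrm (restrictK K (\<lambda>p q. P_hat N (\<lambda>i j. X N i j \<omega>) z0 p q - P_bar M N (X N) z0 p q))"
        using n restrictK_KMat unfolding is_mat_norm_def by blast
      also have "\<dots> \<le> F N \<omega>" unfolding F_def by (rule Max_ge) (use fin z0 in auto)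
      finally have "0 \<le> F N \<omega>" .
      moreover have "F N \<omega> \<le> Cn * S.tt g' N"
        unfolding F_def using fin nem each by (subst Max_le_iff) auto
      ultimately show ?thesis by simp
    qed
    have ae1: "AE \<omega> in M. eventually (\<lambda>n. \<omega> \<notin> S.bad n g' (S.tt g' n)) sequentially"
      by (rule S.bc[OF g'1])
    show "AE \<omega> in M. (\<lambda>N. Max ((\<lambda>z. nrm (restrictK K (\<lambda>p q.
                 P_hat N (\<lambda>i j. X N i j \<omega>) z p q - P_bar M N (X N) z p q))) ` Zgam K N g')) \<longlonglongrightarrow> 0"
      using ae1 AE_space
    proof eventually_elim
      case (elim \<omega>)
      have ev: "eventually (\<lambda>N. 0 \<le> F N \<omega> \<and> F N \<omega> \<le> Cn * S.tt g' N) sequentially"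
        using elim(1) eventually_ge_at_top[of "max N1' 1"] by eventually_elim (use bnd elim(2) in blast)
      have "(\<lambda>N. F N \<omega>) \<longlonglongrightarrow> 0"
        by (rule tendsto_sandwich[OF _ _ tendsto_const S.tt_lim[OF g'1(1)]]) (use ev in \<open>auto elim: eventually_mono\<close>)
      then show ?case unfolding F_def .
    qed
  qed
  show ?thesis using part1 part2 part3 by blast
qed

end
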